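(* Let $K$ be a field, $A$ a cocommutative Hopf algebra over $K$ with antipode $S$, and $x\colon X\to A$, $y\colon Y\to A$ inclusions of Hopf subalgebras. The following are equivalent: (a) there exists a (necessarily unique) morphism of Hopf algebras $p\colon X\otimes Y\to A$ with $p(a\otimes 1)=a$ for all $a\in X$ and $p(1\otimes b)=b$ for all $b\in Y$; (b) $ab=ba$ for all $a\in X$ and $b\in Y$; (c) $a_1b_1S(a_2)S(b_2)=\epsilon(a)\epsilon(b)1$ for all $a\in X$ and $b\in Y$.
   Context: Sweedler notation $\Delta(a)=a_1\otimes a_2$ is used. $X\otimes Y$ is the product of $X$ and $Y$ in the category of cocommutative Hopf algebras, with the tensor product Hopf algebra structure; condition (a) says that $X$ and $Y$ commute in the sense of Huq. *)

theory Defs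
  imports Main
begin

text \<open>A vector space over a field 'k is modelled (up to isomorphism, since every
vector space has a basis) as the space of finitely supported functions 'b \<Rightarrow> 'k,
for a basis index type 'b.  The tensor product of such spaces with bases 'a, 'c
is the space of finitely supported functions on 'a \<times> 'c, with u \<otimes> v the
function (i,j) \<mapsto> u i * v j.\<close>

definition fsvec :: "('a \<Rightarrow> 'k::zero) set" where
  "fsvec = {f. finite {x. f x \<noteq> 0}}"

definition bas :: "'a \<Rightarrow> 'a \<Rightarrow> 'k::{zero,one}" where
  "bas i = (\<lambda>j. if j = i then 1 else 0)"

definition vzero :: "'a \<Rightarrow> 'k::zero" where
  "vzero = (\<lambda>_. 0)"

definition vadd :: "('a \<Rightarrow> 'k::plus) \<Rightarrow> ('a \<Rightarrow> 'k) \<Rightarrow> 'a \<Rightarrow> 'k" where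
  "vadd u v = (\<lambda>x. u x + v x)"

definition smul :: "'k::times \<Rightarrow> ('a \<Rightarrow> 'k) \<Rightarrow> 'a \<Rightarrow> 'k" where
  "smul c u = (\<lambda>x. c * u x)"

text \<open>Linear extension: lsum t F = sum over x in supp t of t(x) * F(x), i.e. the
value at t of the linear map sending the basis vector x to F x.\<close>
definition lsum :: "('a \<Rightarrow> 'k::comm_ring_1) \<Rightarrow> ('a \<Rightarrow> 'c \<Rightarrow> 'k) \<Rightarrow> 'c \<Rightarrow> 'k" where
  "lsum t F = (\<lambda>c. \<Sum>x\<in>{x. t x \<noteq> 0}. t x * F x c)"

definition tensor :: "('a \<Rightarrow> 'k::times) \<Rightarrow> ('c \<Rightarrow> 'k) \<Rightarrow> 'a \<times> 'c \<Rightarrow> 'k" where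
  "tensor u v = (\<lambda>(i, j). u i * v j)"

definition linear_on :: "('a \<Rightarrow> 'k::comm_ring_1) set \<Rightarrow> (('a \<Rightarrow> 'k) \<Rightarrow> ('c \<Rightarrow> 'k)) \<Rightarrow> bool" where
  "linear_on V f \<longleftrightarrow>
     (\<forall>u\<in>V. \<forall>v\<in>V. f (vadd u v) = vadd (f u) (f v)) \<and>
     (\<forall>u\<in>V. \<forall>c. f (smul c u) = smul c (f u))"

definition linear_functional_on :: "('a \<Rightarrow> 'k::comm_ring_1) set \<Rightarrow> (('a \<Rightarrow> 'k) \<Rightarrow> 'k) \<Rightarrow> bool" where
  "linear_functional_on V f \<longleftrightarrow>
     (\<forall>u\<in>V. \<forall>v\<in>V. f (vadd u v) = f u + f v) \<and>
     (\<forall>u\<in>V. \<forall>c. f (smul c u) = c * f u)"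

text \<open>The additive (= linear, for subspaces) span of the tensors x \<otimes> y, x \<in> X, y \<in> Y:
the subspace X \<otimes> Y of A \<otimes> A.\<close>
definition tspan :: "('a \<Rightarrow> 'k::comm_ring_1) set \<Rightarrow> ('c \<Rightarrow> 'k) set \<Rightarrow> ('a \<times> 'c \<Rightarrow> 'k) set" where
  "tspan X Y = {t. \<exists>(n::nat) xs ys. (\<forall>k<n. xs k \<in> X \<and> ys k \<in> Y) \<and>
                      t = (\<lambda>p. \<Sum>k<n. tensor (xs k) (ys k) p)}"

record ('b, 'k) hopf =
  hmult :: "('b \<Rightarrow> 'k) \<Rightarrow> ('b \<Rightarrow> 'k) \<Rightarrow> 'b \<Rightarrow> 'k"
  hone :: "'b \<Rightarrow> 'k"
  hcomult :: "('b \<Rightarrow> 'k) \<Rightarrow> 'b \<times> 'b \<Rightarrow> 'k"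
  hcounit :: "('b \<Rightarrow> 'k) \<Rightarrow> 'k"
  hantipode :: "('b \<Rightarrow> 'k) \<Rightarrow> 'b \<Rightarrow> 'k"

definition hopf_algebra :: "('b, 'k::field) hopf \<Rightarrow> bool" where
  "hopf_algebra H \<longleftrightarrow>
    (let m = hmult H; e = hone H; \<Delta> = hcomult H; \<epsilon> = hcounit H; S = hantipode H in
     e \<in> fsvec \<and>
     (\<forall>u\<in>fsvec. \<forall>v\<in>fsvec. m u v \<in> fsvec) \<and>
     (\<forall>u\<in>fsvec. \<Delta> u \<in> fsvec) \<and>
     (\<forall>u\<in>fsvec. S u \<in> fsvec) \<and>
     (\<forall>v\<in>fsvec. linear_on fsvec (\<lambda>u. m u v) \<and> linear_on fsvec (m v)) \<and>
     linear_on fsvec \<Delta> \<and> linear_functional_on fsvec \<epsilon> \<and> linear_on fsvec S \<and>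
     (\<forall>u\<in>fsvec. \<forall>v\<in>fsvec. \<forall>w\<in>fsvec. m (m u v) w = m u (m v w)) \<and>
     (\<forall>u\<in>fsvec. m e u = u \<and> m u e = u) \<and>
     (\<forall>u\<in>fsvec.
        lsum (\<Delta> u) (\<lambda>(i, j). tensor (\<Delta> (bas i)) (bas j)) =
        (\<lambda>((p, q), r). lsum (\<Delta> u) (\<lambda>(i, j). tensor (bas i) (\<Delta> (bas j))) (p, (q, r)))) \<and>
     (\<forall>u\<in>fsvec.
        lsum (\<Delta> u) (\<lambda>(i, j). smul (\<epsilon> (bas i)) (bas j)) = u \<and>
        lsum (\<Delta> u) (\<lambda>(i, j). smul (\<epsilon> (bas j)) (bas i)) = u) \<and>
     (\<forall>u\<in>fsvec. \<forall>v\<in>fsvec.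
        \<Delta> (m u v) = lsum (\<Delta> u) (\<lambda>(i, j). lsum (\<Delta> v) (\<lambda>(k, l).
                         tensor (m (bas i) (bas k)) (m (bas j) (bas l))))) \<and>
     \<Delta> e = tensor e e \<and>
     (\<forall>u\<in>fsvec. \<forall>v\<in>fsvec. \<epsilon> (m u v) = \<epsilon> u * \<epsilon> v) \<and>
     \<epsilon> e = 1 \<and>
     (\<forall>u\<in>fsvec.
        lsum (\<Delta> u) (\<lambda>(i, j). m (S (bas i)) (bas j)) = smul (\<epsilon> u) e \<and>
        lsum (\<Delta> u) (\<lambda>(i, j). m (bas i) (S (bas j))) = smul (\<epsilon> u) e))"

definition cocommutative :: "('b, 'k::field) hopf \<Rightarrow> bool" where
  "cocommutative H \<longleftrightarrow> (\<forall>u\<in>fsvec. \<forall>i j. hcomult H u (i, j) = hcomult H u (j, i))"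

definition hopf_subalgebra :: "('b, 'k::field) hopf \<Rightarrow> ('b \<Rightarrow> 'k) set \<Rightarrow> bool" where
  "hopf_subalgebra H X \<longleftrightarrow>
     X \<subseteq> fsvec \<and> vzero \<in> X \<and>
     (\<forall>u\<in>X. \<forall>v\<in>X. vadd u v \<in> X) \<and> (\<forall>u\<in>X. \<forall>c. smul c u \<in> X) \<and>
     hone H \<in> X \<and> (\<forall>u\<in>X. \<forall>v\<in>X. hmult H u v \<in> X) \<and>
     (\<forall>u\<in>X. hantipode H u \<in> X) \<and>
     (\<forall>u\<in>X. hcomult H u \<in> tspan X X)"

definition tmult :: "('b, 'k::field) hopf \<Rightarrow> ('b \<times> 'b \<Rightarrow> 'k) \<Rightarrow> ('b \<times> 'b \<Rightarrow> 'k) \<Rightarrow> 'b \<times> 'b \<Rightarrow> 'k" where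
  "tmult H s t = lsum s (\<lambda>(i, j). lsum t (\<lambda>(k, l).
       tensor (hmult H (bas i) (bas k)) (hmult H (bas j) (bas l))))"

definition tone :: "('b, 'k::field) hopf \<Rightarrow> 'b \<times> 'b \<Rightarrow> 'k" where
  "tone H = tensor (hone H) (hone H)"

text \<open>\<Delta>(a \<otimes> b) = (a1 \<otimes> b1) \<otimes> (a2 \<otimes> b2).\<close>
definition tcomult :: "('b, 'k::field) hopf \<Rightarrow> ('b \<times> 'b \<Rightarrow> 'k) \<Rightarrow> ('b \<times> 'b) \<times> ('b \<times> 'b) \<Rightarrow> 'k" where
  "tcomult H t = lsum t (\<lambda>(i, j). (\<lambda>((p, r), (q, s)).
       hcomult H (bas i) (p, q) * hcomult H (bas j) (r, s)))"

definition tcounit :: "('b, 'k::field) hopf \<Rightarrow> ('b \<times> 'b \<Rightarrow> 'k) \<Rightarrow> 'k" where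
  "tcounit H t = (\<Sum>(i, j)\<in>{x. t x \<noteq> 0}. t (i, j) * hcounit H (bas i) * hcounit H (bas j))"

text \<open>p is a morphism of Hopf algebras (i.e. of bialgebras; compatibility with the
antipode is then automatic) from X \<otimes> Y to A.  p is given as a linear map on all of
A \<otimes> A (any linear map on the subspace X \<otimes> Y extends, over a field); the morphism
conditions are imposed on X \<otimes> Y only.\<close>
definition tensor_hopf_morphism ::
  "('b, 'k::field) hopf \<Rightarrow> ('b \<Rightarrow> 'k) set \<Rightarrow> ('b \<Rightarrow> 'k) set \<Rightarrow> (('b \<times> 'b \<Rightarrow> 'k) \<Rightarrow> 'b \<Rightarrow> 'k) \<Rightarrow> bool" where
  "tensor_hopf_morphism H X Y p \<longleftrightarrow>
     (\<forall>t\<in>fsvec. p t \<in> fsvec) \<and> linear_on fsvec p \<and>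
     (\<forall>s\<in>tspan X Y. \<forall>t\<in>tspan X Y. p (tmult H s t) = hmult H (p s) (p t)) \<and>
     p (tone H) = hone H \<and>
     (\<forall>t\<in>tspan X Y. hcomult H (p t) =
         lsum (tcomult H t) (\<lambda>(x, y). tensor (p (bas x)) (p (bas y)))) \<and>
     (\<forall>t\<in>tspan X Y. hcounit H (p t) = tcounit H t)"

end

theory Submission
  imports Defs
begin


lemma fsvec_iff: "u \<in> fsvec \<longleftrightarrow> finite {x. u x \<noteq> 0}"
  by (simp add: fsvec_def)

lemma lsum_alt:
  assumes "finite S" "{x. u x \<noteq> 0} \<subseteq> S"
  shows "lsum u F c = (\<Sum>x\<in>S. u x * F x c)"
  unfolding lsum_def using assms by (auto intro!: sum.mono_neutral_left)

lemma vzero_fs: "vzero \<in> fsvec" by (simp add: fsvec_def vzero_def)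
lemma zero_fs: "(\<lambda>_. 0) \<in> fsvec" by (simp add: fsvec_def)

lemma vadd_fs: "(u::'a \<Rightarrow> 'k::comm_ring_1) \<in> fsvec \<Longrightarrow> v \<in> fsvec \<Longrightarrow> vadd u v \<in> fsvec"
  unfolding fsvec_iff
  by (rule finite_subset[of _ "{x. u x \<noteq> 0} \<union> {x. v x \<noteq> 0}"]) (auto simp: vadd_def)

lemma smul_fs: "(u::'a \<Rightarrow> 'k::comm_ring_1) \<in> fsvec \<Longrightarrow> smul c u \<in> fsvec"
  unfolding fsvec_iff
  by (rule finite_subset[of _ "{x. u x \<noteq> 0}"]) (auto simp: smul_def)

lemma bas_fs: "(bas i :: 'a \<Rightarrow> 'k::zero_neq_one) \<in> fsvec"
  unfolding fsvec_iff
  by (rule finite_subset[of _ "{i}"]) (auto simp: bas_def)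

lemma tensor_fs: "(a::'a \<Rightarrow> 'k::{mult_zero}) \<in> fsvec \<Longrightarrow> (b::'c \<Rightarrow> 'k) \<in> fsvec \<Longrightarrow> tensor a b \<in> fsvec"
  unfolding fsvec_iff
  by (rule finite_subset[of _ "{x. a x \<noteq> 0} \<times> {x. b x \<noteq> 0}"]) (auto simp: tensor_def)

lemma vsum_fs:
  fixes G :: "'i \<Rightarrow> 'a \<Rightarrow> 'k::comm_ring_1"
  assumes "finite S" "\<forall>x\<in>S. G x \<in> fsvec"
  shows "(\<lambda>c. \<Sum>x\<in>S. G x c) \<in> fsvec"
  unfolding fsvec_iff
proof (rule finite_subset[of _ "\<Union>x\<in>S. {c. G x c \<noteq> 0}"])
  show "{c. (\<Sum>x\<in>S. G x c) \<noteq> 0} \<subseteq> (\<Union>x\<in>S. {c. G x c \<noteq> 0})"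
    by (auto intro: ccontr simp: sum.neutral)
  show "finite (\<Union>x\<in>S. {c. G x c \<noteq> 0})"
    using assms by (auto simp: fsvec_def)
qed

lemma lsum_fs:
  fixes u :: "'a \<Rightarrow> 'k::comm_ring_1"
  assumes "u \<in> fsvec" "\<forall>x. F x \<in> fsvec"
  shows "lsum u F \<in> fsvec"
proof -
  have "lsum u F = (\<lambda>c. \<Sum>x\<in>{x. u x \<noteq> 0}. smul (u x) (F x) c)"
    by (simp add: lsum_def smul_def)
  also have "\<dots> \<in> fsvec"
    apply (intro vsum_fs) using assms(1) apply (simp add: fsvec_iff) using assms(2) smul_fs by blast
  finally show ?thesis .
qed

lemma lin_zero:
  fixes f :: "('a \<Rightarrow> 'k::comm_ring_1) \<Rightarrow> ('c \<Rightarrow> 'k)"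
  assumes "linear_on fsvec f"
  shows "f vzero = vzero"
proof -
  have "f vzero = f (smul 0 vzero)" by (simp add: smul_def vzero_def)
  also have "\<dots> = smul 0 (f vzero)" using assms vzero_fs unfolding linear_on_def by blast
  finally show ?thesis by (simp add: smul_def vzero_def)
qed

lemma linear_vsum:
  assumes lin: "linear_on fsvec f" and "finite S" and "\<forall>x\<in>S. G x \<in> fsvec"
  shows "f (\<lambda>c. \<Sum>x\<in>S. G x c) = (\<lambda>c. \<Sum>x\<in>S. f (G x) c)"
  using assms(2,3)
proof (induction S rule: finite_induct)
  case empty
  then show ?case using lin_zero[OF lin] by (simp add: vzero_def)
next
  case (insert a S)
  have "(\<lambda>c. \<Sum>x\<in>insert a S. G x c) = vadd (G a) (\<lambda>c. \<Sum>x\<in>S. G x c)"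
    using insert by (simp add: vadd_def)
  moreover have "(\<lambda>c. \<Sum>x\<in>S. G x c) \<in> fsvec" using insert by (intro vsum_fs) auto
  ultimately have "f (\<lambda>c. \<Sum>x\<in>insert a S. G x c) = vadd (f (G a)) (f (\<lambda>c. \<Sum>x\<in>S. G x c))"
    using lin insert by (simp add: linear_on_def)
  then show ?case using insert by (simp add: vadd_def)
qed

lemma lsum_as_vsum: "lsum u F = (\<lambda>c. \<Sum>x\<in>{x. u x \<noteq> 0}. smul (u x) (F x) c)"
  by (simp add: lsum_def smul_def)

lemma PL:
  assumes lin: "linear_on fsvec f" and u: "u \<in> fsvec" and G: "\<forall>x. G x \<in> fsvec"
  shows "f (lsum u G) = lsum u (\<lambda>x. f (G x))"
proof -
  have "f (lsum u G) = (\<lambda>c. \<Sum>x\<in>{x. u x \<noteq> 0}. f (smul (u x) (G x)) c)"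
    unfolding lsum_as_vsum apply (intro linear_vsum[OF lin]) using u apply (simp add: fsvec_iff) using G smul_fs by blast
  also have "\<dots> = lsum u (\<lambda>x. f (G x))"
    unfolding lsum_as_vsum using lin G by (simp add: linear_on_def)
  finally show ?thesis .
qed

lemma lsum_bas: "lsum (bas i :: 'a \<Rightarrow> 'k::comm_ring_1) F = F i"
proof -
  have "{x. (bas i :: 'a \<Rightarrow> 'k) x \<noteq> 0} = {i}" by (auto simp: bas_def)
  then show ?thesis by (simp add: lsum_def bas_def)
qed

lemma lsum_basis:
  assumes "u \<in> fsvec" shows "lsum u bas = u"
proof
  fix c
  have "lsum u bas c = (\<Sum>x\<in>{x. u x \<noteq> 0}. u x * bas x c)" by (simp add: lsum_def)
  also have "\<dots> = (\<Sum>x\<in>{x. u x \<noteq> 0}. if x = c then u c else 0)"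
    by (intro sum.cong) (auto simp: bas_def)
  also have "\<dots> = u c" using assms by (simp add: fsvec_iff)
  finally show "lsum u bas c = u c" .
qed

lemma EXP1:
  assumes "linear_on fsvec f" "u \<in> fsvec"
  shows "f u = lsum u (\<lambda>i. f (bas i))"
  using PL[OF assms(1,2), of bas] lsum_basis[OF assms(2)] bas_fs by metis

lemma lsum_add:
  assumes "u \<in> fsvec" "v \<in> fsvec"
  shows "lsum (vadd u v) F = vadd (lsum u F) (lsum v F)"
proof
  fix c
  let ?S = "{x. u x \<noteq> 0} \<union> {x. v x \<noteq> 0}"
  have f: "finite ?S" using assms by (simp add: fsvec_iff)
  have "lsum (vadd u v) F c = (\<Sum>x\<in>?S. vadd u v x * F x c)"
    by (rule lsum_alt[OF f]) (auto simp: vadd_def)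
  moreover have "lsum u F c = (\<Sum>x\<in>?S. u x * F x c)" by (rule lsum_alt[OF f]) auto
  moreover have "lsum v F c = (\<Sum>x\<in>?S. v x * F x c)" by (rule lsum_alt[OF f]) auto
  ultimately show "lsum (vadd u v) F c = vadd (lsum u F) (lsum v F) c"
    by (simp add: vadd_def distrib_right sum.distrib)
qed

lemma lsum_smul: "lsum (smul (a::'k::field) u) F = smul a (lsum u F)"
proof (cases "a = 0")
  case True then show ?thesis by (simp add: lsum_def smul_def)
next
  case False
  then have "{x. smul a u x \<noteq> 0} = {x. u x \<noteq> 0}" by (auto simp: smul_def)
  then show ?thesis by (simp add: lsum_def smul_def sum_distrib_left mult.assoc)
qed

definition lmap :: "(('a \<Rightarrow> 'k::comm_ring_1) \<Rightarrow> ('c \<Rightarrow> 'k)) \<Rightarrow> bool" where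
  "lmap f \<longleftrightarrow> linear_on fsvec f \<and> (\<forall>u\<in>fsvec. f u \<in> fsvec)"

lemma lmap_lin: "lmap f \<Longrightarrow> linear_on fsvec f" by (simp add: lmap_def)
lemma lmap_fs: "lmap f \<Longrightarrow> u \<in> fsvec \<Longrightarrow> f u \<in> fsvec" by (simp add: lmap_def)

lemma lmap_comp: "lmap f \<Longrightarrow> lmap g \<Longrightarrow> lmap (\<lambda>x. g (f x))"
  by (simp add: lmap_def linear_on_def smul_fs vadd_fs)

lemma lmap_lsum:
  fixes F :: "'a \<Rightarrow> 'c \<Rightarrow> 'k::field"
  shows "\<forall>x. F x \<in> fsvec \<Longrightarrow> lmap (\<lambda>u. lsum u F)"
  by (simp add: lmap_def linear_on_def lsum_add lsum_smul lsum_fs)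

lemma lsum_vsum:
  fixes G :: "'i \<Rightarrow> 'a \<Rightarrow> 'k::field"
  assumes "finite S" "\<forall>k\<in>S. G k \<in> fsvec"
  shows "lsum (\<lambda>c. \<Sum>k\<in>S. G k c) F = (\<lambda>c. \<Sum>k\<in>S. lsum (G k) F c)"
  using linear_vsum[of "\<lambda>u. lsum u F", OF _ assms]
  by (simp add: linear_on_def lsum_add lsum_smul)

lemma lsum_lsum:
  fixes w :: "'a \<Rightarrow> 'k::field"
  assumes "w \<in> fsvec" "\<forall>x. G x \<in> fsvec"
  shows "lsum (lsum w G) F = lsum w (\<lambda>x. lsum (G x) F)"
  using PL[of "\<lambda>u. lsum u F", OF _ assms]
  by (simp add: linear_on_def lsum_add lsum_smul)

lemma lsum_tensor:
  fixes a :: "'a \<Rightarrow> 'k::comm_ring_1" and b :: "'b \<Rightarrow> 'k"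
  assumes "a \<in> fsvec" "b \<in> fsvec"
  shows "lsum (tensor a b) F = lsum a (\<lambda>i. lsum b (\<lambda>j. F (i, j)))"
proof
  fix c
  let ?S = "{x. a x \<noteq> 0} \<times> {x. b x \<noteq> 0}"
  have "lsum (tensor a b) F c = (\<Sum>x\<in>?S. tensor a b x * F x c)"
    using assms by (intro lsum_alt) (auto simp: fsvec_iff tensor_def)
  also have "\<dots> = (\<Sum>i\<in>{x. a x \<noteq> 0}. \<Sum>j\<in>{x. b x \<noteq> 0}. a i * (b j * F (i, j) c))"
    by (simp add: sum.cartesian_product tensor_def mult.assoc split_def)
  also have "\<dots> = lsum a (\<lambda>i. lsum b (\<lambda>j. F (i, j))) c"
    by (simp add: lsum_def sum_distrib_left)
  finally show "lsum (tensor a b) F c = lsum a (\<lambda>i. lsum b (\<lambda>j. F (i, j))) c" .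
qed

lemma lsum_swap:
  "lsum u (\<lambda>i. lsum v (\<lambda>j. F i j)) = lsum v (\<lambda>j. lsum u (\<lambda>i. F i j))"
  unfolding lsum_def
  by (rule ext) (simp add: sum_distrib_left sum.swap[of _ "{x. u x \<noteq> 0}"] mult.left_commute)

lemma lsum_vsum_right:
  "lsum u (\<lambda>x c. \<Sum>k\<in>K. F k x c) = (\<lambda>c. \<Sum>k\<in>K. lsum u (F k) c)"
  unfolding lsum_def
  by (rule ext) (simp add: sum_distrib_left sum.swap[of _ "{x. u x \<noteq> 0}"])

lemma tensor_lsum_left: "tensor (lsum u F) V = lsum u (\<lambda>i. tensor (F i) V)"
  unfolding lsum_def tensor_def
  by (rule ext) (auto simp: sum_distrib_right mult.assoc)

lemma tensor_lsum_right: "tensor U (lsum v G) = lsum v (\<lambda>j. tensor U (G j))"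
  unfolding lsum_def tensor_def
  by (rule ext) (auto simp: sum_distrib_left mult.left_commute)

lemma lsum_reindex:
  assumes "\<And>x. g (h x) = x" "\<And>y. h (g y) = y"
  shows "lsum (\<lambda>x. w (h x)) F = lsum w (\<lambda>y. F (g y))"
  unfolding lsum_def
proof (rule ext)
  fix c
  show "(\<Sum>x\<in>{x. w (h x) \<noteq> 0}. w (h x) * F x c) = (\<Sum>y\<in>{y. w y \<noteq> 0}. w y * F (g y) c)"
    by (rule sum.reindex_bij_witness[of _ g h]) (auto simp: assms)
qed

lemma lsum_smulF: "lsum u (\<lambda>x. smul c (F x)) = smul c (lsum u F)"
  unfolding lsum_def smul_def
  by (rule ext) (simp add: sum_distrib_left mult.left_commute)

lemma lsum_smul_const: "lsum u (\<lambda>x. smul (\<phi> x) v) = smul (lsum u (\<lambda>x _. \<phi> x) ()) v"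
  unfolding lsum_def smul_def
  by (rule ext) (simp add: sum_distrib_right mult.assoc)

lemma lsum_bas_smul:
  assumes "v \<in> fsvec" shows "lsum v (\<lambda>j. smul c (bas j)) = smul c v"
  by (simp add: lsum_smulF lsum_basis assms)


lemma lin_comp: "lmap f \<Longrightarrow> linear_on fsvec g \<Longrightarrow> linear_on fsvec (\<lambda>x. g (f x))"
  by (simp add: lmap_def linear_on_def smul_fs vadd_fs)

lemma ML2:
  fixes Q :: "('a \<Rightarrow> 'k::comm_ring_1) \<Rightarrow> ('b \<Rightarrow> 'k) \<Rightarrow> 'c \<Rightarrow> 'k"
  assumes "\<And>y. y \<in> fsvec \<Longrightarrow> linear_on fsvec (\<lambda>x. Q x y)"
    "\<And>x. x \<in> fsvec \<Longrightarrow> linear_on fsvec (\<lambda>y. Q x y)" "x \<in> fsvec" "y \<in> fsvec"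
  shows "Q x y = lsum x (\<lambda>i. lsum y (\<lambda>j. Q (bas i) (bas j)))"
proof -
  have "Q x y = lsum x (\<lambda>i. Q (bas i) y)" using EXP1[OF assms(1)[OF assms(4)] assms(3)] .
  also have "\<dots> = lsum x (\<lambda>i. lsum y (\<lambda>j. Q (bas i) (bas j)))"
    using EXP1[OF assms(2)[OF bas_fs] assms(4)] by simp
  finally show ?thesis .
qed

lemma ML4:
  fixes Q :: "('a1 \<Rightarrow> 'k::comm_ring_1) \<Rightarrow> ('a2 \<Rightarrow> 'k) \<Rightarrow> ('a3 \<Rightarrow> 'k) \<Rightarrow> ('a4 \<Rightarrow> 'k) \<Rightarrow> 'c \<Rightarrow> 'k"
  assumes "\<And>b c d. b \<in> fsvec \<Longrightarrow> c \<in> fsvec \<Longrightarrow> d \<in> fsvec \<Longrightarrow> linear_on fsvec (\<lambda>x. Q x b c d)"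
    "\<And>a c d. a \<in> fsvec \<Longrightarrow> c \<in> fsvec \<Longrightarrow> d \<in> fsvec \<Longrightarrow> linear_on fsvec (\<lambda>x. Q a x c d)"
    "\<And>a b d. a \<in> fsvec \<Longrightarrow> b \<in> fsvec \<Longrightarrow> d \<in> fsvec \<Longrightarrow> linear_on fsvec (\<lambda>x. Q a b x d)"
    "\<And>a b c. a \<in> fsvec \<Longrightarrow> b \<in> fsvec \<Longrightarrow> c \<in> fsvec \<Longrightarrow> linear_on fsvec (\<lambda>x. Q a b c x)"
    "a \<in> fsvec" "b \<in> fsvec" "c \<in> fsvec" "d \<in> fsvec"
  shows "Q a b c d = lsum a (\<lambda>i. lsum b (\<lambda>j. lsum c (\<lambda>k. lsum d (\<lambda>l.
            Q (bas i) (bas j) (bas k) (bas l)))))"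
proof -
  have "Q a b c d = lsum a (\<lambda>i. Q (bas i) b c d)" using EXP1[OF assms(1)[OF assms(6-8)] assms(5)] .
  also have "\<dots> = lsum a (\<lambda>i. lsum b (\<lambda>j. Q (bas i) (bas j) c d))"
    using EXP1[OF assms(2)[OF bas_fs assms(7,8)] assms(6)] by simp
  also have "\<dots> = lsum a (\<lambda>i. lsum b (\<lambda>j. lsum c (\<lambda>k. Q (bas i) (bas j) (bas k) d)))"
    using EXP1[OF assms(3)[OF bas_fs bas_fs assms(8)] assms(7)] by simp
  also have "\<dots> = lsum a (\<lambda>i. lsum b (\<lambda>j. lsum c (\<lambda>k. lsum d (\<lambda>l. Q (bas i) (bas j) (bas k) (bas l)))))"
    using EXP1[OF assms(4)[OF bas_fs bas_fs bas_fs] assms(8)] by simp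
  finally show ?thesis .
qed

lemma lin_tensor_l: "linear_on fsvec (\<lambda>x. tensor (x::'a \<Rightarrow> 'k::comm_ring_1) V)"
  unfolding linear_on_def tensor_def vadd_def smul_def
  by (auto intro!: ext simp: distrib_right mult.assoc)

lemma lin_tensor_r: "linear_on fsvec (\<lambda>x. tensor U (x::'a \<Rightarrow> 'k::comm_ring_1))"
  unfolding linear_on_def tensor_def vadd_def smul_def
  by (auto intro!: ext simp: distrib_left mult.left_commute)

lemma lin_unit:
  "linear_functional_on fsvec \<phi> \<Longrightarrow> linear_on fsvec (\<lambda>v (_::unit). \<phi> v)"
  unfolding linear_on_def linear_functional_on_def vadd_def smul_def by auto

lemma lsum_tspan:
  fixes xs ys :: "nat \<Rightarrow> 'a \<Rightarrow> 'k::field"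
  assumes "\<forall>k<n. xs k \<in> fsvec \<and> ys k \<in> fsvec"
  shows "lsum (\<lambda>p. \<Sum>k<n. tensor (xs k) (ys k) p) F
     = (\<lambda>c. \<Sum>k<n. lsum (xs k) (\<lambda>i. lsum (ys k) (\<lambda>j. F (i, j))) c)"
  using assms by (simp add: lsum_vsum tensor_fs lsum_tensor)

lemma tspan_fs:
  fixes xs ys :: "nat \<Rightarrow> 'a \<Rightarrow> 'k::field"
  assumes "\<forall>k<n. xs k \<in> fsvec \<and> ys k \<in> fsvec"
  shows "(\<lambda>p. \<Sum>k<n. tensor (xs k) (ys k) p) \<in> fsvec"
  using assms by (intro vsum_fs) (auto simp: tensor_fs)

locale hctx =
  fixes H :: "('b, 'k::field) hopf"
  assumes hopf: "hopf_algebra H"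
begin

abbreviation "mm \<equiv> hmult H"
abbreviation "ee \<equiv> hone H"
abbreviation "DD \<equiv> hcomult H"
abbreviation "ep \<equiv> hcounit H"
abbreviation "SS \<equiv> hantipode H"

lemmas ax = hopf[unfolded hopf_algebra_def Let_def]

lemma e_fs: "ee \<in> fsvec" using ax by blast
lemma m_fs: "u \<in> fsvec \<Longrightarrow> v \<in> fsvec \<Longrightarrow> mm u v \<in> fsvec" using ax by blast
lemma D_fs: "u \<in> fsvec \<Longrightarrow> DD u \<in> fsvec" using ax by blast
lemma S_fs: "u \<in> fsvec \<Longrightarrow> SS u \<in> fsvec" using ax by blast
lemma lin_m1: "v \<in> fsvec \<Longrightarrow> lmap (\<lambda>u. mm u v)" using ax m_fs unfolding lmap_def by blast
lemma lin_m2: "v \<in> fsvec \<Longrightarrow> lmap (mm v)" using ax m_fs unfolding lmap_def by blast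
lemma lin_D: "lmap DD" using ax D_fs unfolding lmap_def by blast
lemma lin_S: "lmap SS" using ax S_fs unfolding lmap_def by blast
lemma lin_ep: "linear_functional_on fsvec ep" using ax by blast
lemma m_assoc: "u \<in> fsvec \<Longrightarrow> v \<in> fsvec \<Longrightarrow> w \<in> fsvec \<Longrightarrow> mm (mm u v) w = mm u (mm v w)"
  using ax by blast
lemma m_e1: "u \<in> fsvec \<Longrightarrow> mm ee u = u" using ax by blast
lemma m_e2: "u \<in> fsvec \<Longrightarrow> mm u ee = u" using ax by blast
lemma coassoc: "u \<in> fsvec \<Longrightarrow> lsum (DD u) (\<lambda>(i, j). tensor (DD (bas i)) (bas j)) =
        (\<lambda>((p, q), r). lsum (DD u) (\<lambda>(i, j). tensor (bas i) (DD (bas j))) (p, (q, r)))"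
  using ax by blast
lemma counit1: "u \<in> fsvec \<Longrightarrow> lsum (DD u) (\<lambda>(i, j). smul (ep (bas i)) (bas j)) = u"
  using ax by blast
lemma counit2: "u \<in> fsvec \<Longrightarrow> lsum (DD u) (\<lambda>(i, j). smul (ep (bas j)) (bas i)) = u"
  using ax by blast
lemma D_mult: "u \<in> fsvec \<Longrightarrow> v \<in> fsvec \<Longrightarrow>
        DD (mm u v) = lsum (DD u) (\<lambda>(i, j). lsum (DD v) (\<lambda>(k, l).
                         tensor (mm (bas i) (bas k)) (mm (bas j) (bas l))))"
  using ax by blast
lemma ep_mult: "u \<in> fsvec \<Longrightarrow> v \<in> fsvec \<Longrightarrow> ep (mm u v) = ep u * ep v" using ax by blast
lemma anti1: "u \<in> fsvec \<Longrightarrow> lsum (DD u) (\<lambda>(i, j). mm (SS (bas i)) (bas j)) = smul (ep u) ee"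
  using ax by blast
lemma anti2: "u \<in> fsvec \<Longrightarrow> lsum (DD u) (\<lambda>(i, j). mm (bas i) (SS (bas j))) = smul (ep u) ee"
  using ax by blast

lemma mexp: "u \<in> fsvec \<Longrightarrow> v \<in> fsvec \<Longrightarrow> mm u v = lsum u (\<lambda>i. lsum v (\<lambda>j. mm (bas i) (bas j)))"
  by (rule ML2) (auto intro: lmap_lin lin_m1 lin_m2)

lemma ep_lifted: "linear_on fsvec (\<lambda>v (_::unit). ep v)"
  by (rule lin_unit[OF lin_ep])

lemma ep_exp: "u \<in> fsvec \<Longrightarrow> ep u = lsum u (\<lambda>i _. ep (bas i)) ()"
  using EXP1[OF ep_lifted, of u] by (metis)

lemma m_smul1: "u \<in> fsvec \<Longrightarrow> v \<in> fsvec \<Longrightarrow> mm (smul c u) v = smul c (mm u v)"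
  using lin_m1[of v] unfolding lmap_def linear_on_def by blast
lemma m_smul2: "u \<in> fsvec \<Longrightarrow> v \<in> fsvec \<Longrightarrow> mm v (smul c u) = smul c (mm v u)"
  using lin_m2[of v] unfolding lmap_def linear_on_def by blast

end




context hctx
begin

definition PP :: "('b \<times> 'b \<Rightarrow> 'k) \<Rightarrow> 'b \<Rightarrow> 'k" where
  "PP t = lsum t (\<lambda>(i, j). mm (bas i) (bas j))"

lemma lmap_P: "lmap PP"
  unfolding PP_def by (rule lmap_lsum) (auto simp: m_fs bas_fs split: prod.split)

lemma P_tensor: "a \<in> fsvec \<Longrightarrow> b \<in> fsvec \<Longrightarrow> PP (tensor a b) = mm a b"
  by (simp add: PP_def lsum_tensor mexp[symmetric])

lemma P_bas: "PP (bas (i, j)) = mm (bas i) (bas j)"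
  by (simp add: PP_def lsum_bas)

lemma P_sum:
  fixes xs ys :: "nat \<Rightarrow> 'b \<Rightarrow> 'k"
  assumes "\<forall>k<n. xs k \<in> fsvec \<and> ys k \<in> fsvec"
  shows "PP (\<lambda>p. \<Sum>k<n. tensor (xs k) (ys k) p) = (\<lambda>c. \<Sum>k<n. mm (xs k) (ys k) c)"
proof -
  have "PP (\<lambda>p. \<Sum>k<n. tensor (xs k) (ys k) p) = (\<lambda>c. \<Sum>k<n. PP (tensor (xs k) (ys k)) c)"
    by (rule linear_vsum[OF lmap_lin[OF lmap_P]]) (use assms in \<open>auto simp: tensor_fs\<close>)
  then show ?thesis using assms by (simp add: P_tensor)
qed

definition TT :: "'b \<times> 'b \<Rightarrow> 'b \<times> 'b \<Rightarrow> 'b \<times> 'b \<Rightarrow> 'k" where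
  "TT x y = tensor (mm (bas (fst x)) (bas (fst y))) (mm (bas (snd x)) (bas (snd y)))"

lemma tmult_alt: "tmult H s t = lsum s (\<lambda>x. lsum t (\<lambda>y. TT x y))"
  by (simp add: tmult_def TT_def split_def)

lemma tmult_tensor:
  assumes "a \<in> fsvec" "b \<in> fsvec" "c \<in> fsvec" "d \<in> fsvec"
  shows "tmult H (tensor a b) (tensor c d) = tensor (mm a c) (mm b d)"
proof -
  have "tensor (mm a c) (mm b d) = lsum a (\<lambda>i. lsum b (\<lambda>j. lsum c (\<lambda>k. lsum d (\<lambda>l.
            tensor (mm (bas i) (bas k)) (mm (bas j) (bas l))))))"
  proof (rule ML4[where Q = "\<lambda>a b c d. tensor (mm a c) (mm b d)"])
    fix b c d :: "'b \<Rightarrow> 'k" assume "b \<in> fsvec" "c \<in> fsvec" "d \<in> fsvec"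
    then show "linear_on fsvec (\<lambda>x. tensor (mm x c) (mm b d))"
      using lin_comp[OF lin_m1[of c] lin_tensor_l, of "mm b d"] by simp
  next
    fix a c d :: "'b \<Rightarrow> 'k" assume "a \<in> fsvec" "c \<in> fsvec" "d \<in> fsvec"
    then show "linear_on fsvec (\<lambda>x. tensor (mm a c) (mm x d))"
      using lin_comp[OF lin_m1[of d] lin_tensor_r, of "mm a c"] by simp
  next
    fix a b d :: "'b \<Rightarrow> 'k" assume "a \<in> fsvec" "b \<in> fsvec" "d \<in> fsvec"
    then show "linear_on fsvec (\<lambda>x. tensor (mm a x) (mm b d))"
      using lin_comp[OF lin_m2[of a] lin_tensor_l, of "mm b d"] by simp
  next
    fix a b c :: "'b \<Rightarrow> 'k" assume "a \<in> fsvec" "b \<in> fsvec" "c \<in> fsvec"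
    then show "linear_on fsvec (\<lambda>x. tensor (mm a c) (mm b x))"
      using lin_comp[OF lin_m2[of b] lin_tensor_r, of "mm a c"] by simp
  qed (use assms in auto)
  then show ?thesis using assms by (simp add: tmult_alt lsum_tensor TT_def)
qed

lemma tmult_tensor_left:
  fixes xs ys :: "nat \<Rightarrow> 'b \<Rightarrow> 'k"
  assumes "a \<in> fsvec" "b \<in> fsvec" "\<forall>k<n. xs k \<in> fsvec \<and> ys k \<in> fsvec"
  shows "tmult H (tensor a b) (\<lambda>p. \<Sum>k<n. tensor (xs k) (ys k) p)
     = (\<lambda>c. \<Sum>k<n. tensor (mm a (xs k)) (mm b (ys k)) c)"
proof -
  have "tmult H (tensor a b) (\<lambda>p. \<Sum>k<n. tensor (xs k) (ys k) p)
      = lsum (\<lambda>p. \<Sum>k<n. tensor (xs k) (ys k) p) (\<lambda>y. lsum (tensor a b) (\<lambda>x. TT x y))"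
    unfolding tmult_alt by (rule lsum_swap)
  also have "\<dots> = (\<lambda>c. \<Sum>k<n. lsum (tensor (xs k) (ys k)) (\<lambda>y. lsum (tensor a b) (\<lambda>x. TT x y)) c)"
    using assms by (simp add: lsum_vsum tensor_fs)
  also have "\<dots> = (\<lambda>c. \<Sum>k<n. tmult H (tensor a b) (tensor (xs k) (ys k)) c)"
    unfolding tmult_alt by (simp only: lsum_swap[of "tensor a b"])
  also have "\<dots> = (\<lambda>c. \<Sum>k<n. tensor (mm a (xs k)) (mm b (ys k)) c)"
    using assms by (simp add: tmult_tensor)
  finally show ?thesis .
qed

lemma tmult_sums:
  fixes xs ys xs' ys' :: "nat \<Rightarrow> 'b \<Rightarrow> 'k"
  assumes "\<forall>k<n. xs k \<in> fsvec \<and> ys k \<in> fsvec" "\<forall>k<n'. xs' k \<in> fsvec \<and> ys' k \<in> fsvec"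
  shows "tmult H (\<lambda>p. \<Sum>k<n. tensor (xs k) (ys k) p) (\<lambda>p. \<Sum>k<n'. tensor (xs' k) (ys' k) p)
     = (\<lambda>c. \<Sum>j<n. \<Sum>k<n'. tensor (mm (xs j) (xs' k)) (mm (ys j) (ys' k)) c)"
proof -
  let ?t = "\<lambda>p. \<Sum>k<n'. tensor (xs' k) (ys' k) p"
  have "tmult H (\<lambda>p. \<Sum>k<n. tensor (xs k) (ys k) p) ?t
      = (\<lambda>c. \<Sum>j<n. lsum (tensor (xs j) (ys j)) (\<lambda>x. lsum ?t (\<lambda>y. TT x y)) c)"
    using assms(1) by (simp add: tmult_alt lsum_vsum tensor_fs)
  also have "\<dots> = (\<lambda>c. \<Sum>j<n. tmult H (tensor (xs j) (ys j)) ?t c)"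
    by (simp add: tmult_alt)
  also have "\<dots> = (\<lambda>c. \<Sum>j<n. \<Sum>k<n'. tensor (mm (xs j) (xs' k)) (mm (ys j) (ys' k)) c)"
    using assms by (simp add: tmult_tensor_left)
  finally show ?thesis .
qed


lemma comm_term:
  assumes "x \<in> fsvec" "x' \<in> fsvec" "y \<in> fsvec" "y' \<in> fsvec" "mm y x' = mm x' y"
  shows "mm (mm x x') (mm y y') = mm (mm x y) (mm x' y')"
proof -
  have "mm (mm x y) (mm x' y') = mm x (mm y (mm x' y'))" using assms m_assoc[of x y "mm x' y'"] by (simp add: m_fs)
  also have "\<dots> = mm x (mm (mm y x') y')" using assms m_assoc[of y x' y'] by (simp add: m_fs)
  also have "\<dots> = mm x (mm (mm x' y) y')" using assms by simp
  also have "\<dots> = mm x (mm x' (mm y y'))" using assms m_assoc[of x' y y'] by (simp add: m_fs)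
  also have "\<dots> = mm (mm x x') (mm y y')" using assms m_assoc[of x x' "mm y y'"] by (simp add: m_fs)
  finally show ?thesis by simp
qed

lemma m_vsum1:
  fixes A :: "nat \<Rightarrow> 'b \<Rightarrow> 'k"
  assumes "\<forall>j<n. A j \<in> fsvec" "B \<in> fsvec"
  shows "mm (\<lambda>c. \<Sum>j<n. A j c) B = (\<lambda>c. \<Sum>j<n. mm (A j) B c)"
  using linear_vsum[OF lmap_lin[OF lin_m1[OF assms(2)]], of "{..<n}" A] assms by simp

lemma m_vsum2:
  fixes B :: "nat \<Rightarrow> 'b \<Rightarrow> 'k"
  assumes "\<forall>j<n. B j \<in> fsvec" "A \<in> fsvec"
  shows "mm A (\<lambda>c. \<Sum>j<n. B j c) = (\<lambda>c. \<Sum>j<n. mm A (B j) c)"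
  using linear_vsum[OF lmap_lin[OF lin_m2[OF assms(2)]], of "{..<n}" B] assms by simp

lemma P_vsum:
  fixes A :: "nat \<Rightarrow> 'b \<times> 'b \<Rightarrow> 'k"
  assumes "\<forall>j<n. A j \<in> fsvec"
  shows "PP (\<lambda>c. \<Sum>j<n. A j c) = (\<lambda>c. \<Sum>j<n. PP (A j) c)"
  using linear_vsum[OF lmap_lin[OF lmap_P], of "{..<n}" A] assms by simp

lemma P_mult:
  assumes X: "X \<subseteq> fsvec" and Y: "Y \<subseteq> fsvec" and comm: "\<forall>a\<in>X. \<forall>b\<in>Y. mm a b = mm b a"
    and st: "s \<in> tspan X Y" "t \<in> tspan X Y"
  shows "PP (tmult H s t) = mm (PP s) (PP t)"
proof -
  obtain n and xs ys :: "nat \<Rightarrow> 'b \<Rightarrow> 'k" where r1: "\<forall>k<n. xs k \<in> X \<and> ys k \<in> Y"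
    and s: "s = (\<lambda>p. \<Sum>k<n. tensor (xs k) (ys k) p)" using st(1) unfolding tspan_def by blast
  obtain n' and xs' ys' :: "nat \<Rightarrow> 'b \<Rightarrow> 'k" where r2: "\<forall>k<n'. xs' k \<in> X \<and> ys' k \<in> Y"
    and t: "t = (\<lambda>p. \<Sum>k<n'. tensor (xs' k) (ys' k) p)" using st(2) unfolding tspan_def by blast
  have f1: "\<forall>k<n. xs k \<in> fsvec \<and> ys k \<in> fsvec" using r1 X Y by blast
  have f2: "\<forall>k<n'. xs' k \<in> fsvec \<and> ys' k \<in> fsvec" using r2 X Y by blast
  have "PP (tmult H s t) = PP (\<lambda>c. \<Sum>j<n. \<Sum>k<n'. tensor (mm (xs j) (xs' k)) (mm (ys j) (ys' k)) c)"
    using tmult_sums[OF f1 f2] s t by simp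
  also have "\<dots> = (\<lambda>c. \<Sum>j<n. PP (\<lambda>c. \<Sum>k<n'. tensor (mm (xs j) (xs' k)) (mm (ys j) (ys' k)) c) c)"
    by (rule P_vsum) (use f1 f2 in \<open>auto intro!: tspan_fs m_fs\<close>)
  also have "\<dots> = (\<lambda>c. \<Sum>j<n. \<Sum>k<n'. mm (mm (xs j) (xs' k)) (mm (ys j) (ys' k)) c)"
    using f1 f2 by (simp add: P_sum m_fs)
  also have "\<dots> = (\<lambda>c. \<Sum>j<n. \<Sum>k<n'. mm (mm (xs j) (ys j)) (mm (xs' k) (ys' k)) c)"
  proof (intro ext sum.cong refl)
    fix c j k assume "j \<in> {..<n}" "k \<in> {..<n'}"
    then have "xs j \<in> fsvec" "xs' k \<in> fsvec" "ys j \<in> fsvec" "ys' k \<in> fsvec"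
      using f1 f2 by auto
    moreover have "xs' k \<in> X" "ys j \<in> Y" using r1 r2 \<open>j \<in> {..<n}\<close> \<open>k \<in> {..<n'}\<close> by auto
    then have "mm (ys j) (xs' k) = mm (xs' k) (ys j)" using comm by metis
    ultimately have "xs j \<in> fsvec" "xs' k \<in> fsvec" "ys j \<in> fsvec" "ys' k \<in> fsvec"
      "mm (ys j) (xs' k) = mm (xs' k) (ys j)" by auto
    from comm_term[OF this] 
    show "mm (mm (xs j) (xs' k)) (mm (ys j) (ys' k)) c = mm (mm (xs j) (ys j)) (mm (xs' k) (ys' k)) c"
      by simp
  qed
  also have "\<dots> = (\<lambda>c. \<Sum>j<n. mm (mm (xs j) (ys j)) (\<lambda>c. \<Sum>k<n'. mm (xs' k) (ys' k) c) c)"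
    using f1 f2 by (simp add: m_vsum2 m_fs)
  also have "\<dots> = mm (\<lambda>c. \<Sum>j<n. mm (xs j) (ys j) c) (\<lambda>c. \<Sum>k<n'. mm (xs' k) (ys' k) c)"
    using f1 f2 by (simp add: m_vsum1 m_fs vsum_fs)
  also have "\<dots> = mm (PP s) (PP t)" using f1 f2 s t by (simp add: P_sum)
  finally show ?thesis .
qed

definition GG :: "'b \<Rightarrow> 'b \<Rightarrow> ('b \<times> 'b) \<times> ('b \<times> 'b) \<Rightarrow> 'k" where
  "GG i j = (\<lambda>((p, r), (q, s)). DD (bas i) (p, q) * DD (bas j) (r, s))"

lemma tcomult_alt: "tcomult H t = lsum t (\<lambda>(i, j). GG i j)"
  by (simp add: tcomult_def GG_def)

definition hh :: "('x \<times> 'x) \<times> ('x \<times> 'x) \<Rightarrow> ('x \<times> 'x) \<times> ('x \<times> 'x)" where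
  "hh = (\<lambda>((p, r), (q, s)). ((p, q), (r, s)))"

lemma hh_hh: "hh (hh z) = z" by (auto simp: hh_def split: prod.split)

lemma GG_hh: "GG i j = (\<lambda>z. tensor (DD (bas i)) (DD (bas j)) (hh z))"
  by (auto simp: GG_def hh_def tensor_def split: prod.split)

lemma fs_reindex:
  assumes "w \<in> fsvec" "\<And>x. g (h x) = x" "\<And>y. h (g y) = y"
  shows "(\<lambda>x. w (h x)) \<in> fsvec"
proof -
  have "{x. w (h x) \<noteq> 0} = g ` {y. w y \<noteq> 0}"
  proof (rule set_eqI, rule iffI)
    fix x assume "x \<in> {x. w (h x) \<noteq> 0}"
    then show "x \<in> g ` {y. w y \<noteq> 0}" by (intro image_eqI[of _ g "h x"]) (simp_all add: assms)
  next
    fix x assume "x \<in> g ` {y. w y \<noteq> 0}"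
    then show "x \<in> {x. w (h x) \<noteq> 0}" using assms by auto
  qed
  then show ?thesis using assms(1) by (simp add: fsvec_iff)
qed

lemma GG_fs: "GG i j \<in> fsvec"
  unfolding GG_hh by (rule fs_reindex[where g=hh and h=hh]) (auto intro: tensor_fs D_fs bas_fs hh_hh)

lemma GG_lsum: "lsum (GG i j) F = lsum (DD (bas i)) (\<lambda>(p, q). lsum (DD (bas j)) (\<lambda>(r, s). F ((p, r), (q, s))))"
proof -
  have "lsum (GG i j) F = lsum (tensor (DD (bas i)) (DD (bas j))) (\<lambda>y. F (hh y))"
    unfolding GG_hh by (rule lsum_reindex[where g=hh and h=hh]) (rule hh_hh)+
  also have "\<dots> = lsum (DD (bas i)) (\<lambda>x. lsum (DD (bas j)) (\<lambda>y. F (hh (x, y))))"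
    by (simp add: lsum_tensor D_fs bas_fs)
  finally show ?thesis by (simp add: hh_def split_def)
qed

lemma D_m_exp: "x \<in> fsvec \<Longrightarrow> y \<in> fsvec \<Longrightarrow>
   DD (mm x y) = lsum x (\<lambda>i. lsum y (\<lambda>j. DD (mm (bas i) (bas j))))"
  by (rule ML2[where Q = "\<lambda>x y. DD (mm x y)"])
     (auto intro: lin_comp[OF lin_m1 lmap_lin[OF lin_D]] lin_comp[OF lin_m2 lmap_lin[OF lin_D]])

lemma P_comult:
  assumes X: "X \<subseteq> fsvec" and Y: "Y \<subseteq> fsvec" and t: "t \<in> tspan X Y"
  shows "DD (PP t) = lsum (tcomult H t) (\<lambda>(x, y). tensor (PP (bas x)) (PP (bas y)))"
proof -
  obtain n and xs ys :: "nat \<Rightarrow> 'b \<Rightarrow> 'k" where r1: "\<forall>k<n. xs k \<in> X \<and> ys k \<in> Y"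
    and t: "t = (\<lambda>p. \<Sum>k<n. tensor (xs k) (ys k) p)" using t unfolding tspan_def by blast
  have f1: "\<forall>k<n. xs k \<in> fsvec \<and> ys k \<in> fsvec" using r1 X Y by blast
  let ?F = "\<lambda>(x, y). tensor (PP (bas x)) (PP (bas y))"
  have GGf: "\<forall>x. (case x of (i, j) \<Rightarrow> GG i j) \<in> fsvec" by (auto simp: GG_fs split: prod.split)
  have "DD (PP t) = DD (\<lambda>c. \<Sum>k<n. mm (xs k) (ys k) c)" using f1 t by (simp add: P_sum)
  also have "\<dots> = (\<lambda>c. \<Sum>k<n. DD (mm (xs k) (ys k)) c)"
    by (rule linear_vsum[OF lmap_lin[OF lin_D]]) (use f1 in \<open>auto simp: m_fs\<close>)
  also have "\<dots> = (\<lambda>c. \<Sum>k<n. lsum (lsum (tensor (xs k) (ys k)) (\<lambda>(i, j). GG i j)) ?F c)"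
  proof (intro ext sum.cong refl)
    fix c k assume "k \<in> {..<n}"
    then have xy: "xs k \<in> fsvec" "ys k \<in> fsvec" using f1 by auto
    have "lsum (lsum (tensor (xs k) (ys k)) (\<lambda>(i, j). GG i j)) ?F
        = lsum (tensor (xs k) (ys k)) (\<lambda>z. lsum (case z of (i, j) \<Rightarrow> GG i j) ?F)"
      by (rule lsum_lsum[OF tensor_fs[OF xy] GGf])
    also have "\<dots> = lsum (xs k) (\<lambda>i. lsum (ys k) (\<lambda>j. lsum (GG i j) ?F))"
      by (simp add: lsum_tensor xy)
    also have "\<dots> = lsum (xs k) (\<lambda>i. lsum (ys k) (\<lambda>j. DD (mm (bas i) (bas j))))"
      by (simp add: GG_lsum P_bas D_mult bas_fs)
    also have "\<dots> = DD (mm (xs k) (ys k))" by (rule D_m_exp[OF xy, symmetric])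
    finally show "DD (mm (xs k) (ys k)) c = lsum (lsum (tensor (xs k) (ys k)) (\<lambda>(i, j). GG i j)) ?F c"
      by simp
  qed
  also have "\<dots> = lsum (\<lambda>c. \<Sum>k<n. lsum (tensor (xs k) (ys k)) (\<lambda>(i, j). GG i j) c) ?F"
    by (rule lsum_vsum[symmetric]) (use f1 GGf in \<open>auto intro!: lsum_fs tensor_fs\<close>)
  also have "\<dots> = lsum (tcomult H t) ?F"
    unfolding tcomult_alt t by (subst lsum_vsum) (use f1 in \<open>auto intro!: tensor_fs\<close>)
  finally show ?thesis .
qed

lemma tcounit_alt: "tcounit H t = lsum t (\<lambda>z _. ep (bas (fst z)) * ep (bas (snd z))) ()"
  by (simp add: tcounit_def lsum_def split_def mult.assoc)

lemma ep_m_exp: "x \<in> fsvec \<Longrightarrow> y \<in> fsvec \<Longrightarrow>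
   (\<lambda>_::unit. ep x * ep y) = lsum x (\<lambda>i. lsum y (\<lambda>j _. ep (bas i) * ep (bas j)))"
  by (rule ML2[where Q = "\<lambda>x y _. ep x * ep y"])
     (use lin_ep in \<open>auto simp: linear_on_def linear_functional_on_def vadd_def smul_def
        distrib_left distrib_right mult.assoc mult.left_commute\<close>)

lemma ep_vsum:
  fixes A :: "nat \<Rightarrow> 'b \<Rightarrow> 'k"
  assumes "\<forall>j<n. A j \<in> fsvec"
  shows "ep (\<lambda>c. \<Sum>j<n. A j c) = (\<Sum>j<n. ep (A j))"
proof -
  have "(\<lambda>_::unit. ep (\<lambda>c. \<Sum>j<n. A j c)) = (\<lambda>c. \<Sum>j<n. (\<lambda>_::unit. ep (A j)) c)"
    by (rule linear_vsum[OF ep_lifted]) (use assms in auto)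
  from arg_cong[where f="\<lambda>F. F ()", OF this] show ?thesis by simp
qed

lemma P_counit:
  assumes X: "X \<subseteq> fsvec" and Y: "Y \<subseteq> fsvec" and t: "t \<in> tspan X Y"
  shows "ep (PP t) = tcounit H t"
proof -
  obtain n and xs ys :: "nat \<Rightarrow> 'b \<Rightarrow> 'k" where r1: "\<forall>k<n. xs k \<in> X \<and> ys k \<in> Y"
    and t: "t = (\<lambda>p. \<Sum>k<n. tensor (xs k) (ys k) p)" using t unfolding tspan_def by blast
  have f1: "\<forall>k<n. xs k \<in> fsvec \<and> ys k \<in> fsvec" using r1 X Y by blast
  have "ep (PP t) = (\<Sum>k<n. ep (mm (xs k) (ys k)))" using f1 t by (simp add: P_sum ep_vsum m_fs)
  also have "\<dots> = (\<Sum>k<n. lsum (xs k) (\<lambda>i. lsum (ys k) (\<lambda>j _. ep (bas i) * ep (bas j))) ())"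
  proof (intro sum.cong refl)
    fix k assume "k \<in> {..<n}"
    then have xy: "xs k \<in> fsvec" "ys k \<in> fsvec" using f1 by auto
    show "ep (mm (xs k) (ys k)) = lsum (xs k) (\<lambda>i. lsum (ys k) (\<lambda>j _. ep (bas i) * ep (bas j))) ()"
      using fun_cong[OF ep_m_exp[OF xy], of "()"] xy by (simp add: ep_mult)
  qed
  also have "\<dots> = tcounit H t"
    unfolding tcounit_alt t using f1 by (simp add: lsum_vsum lsum_tensor tensor_fs)
  finally show ?thesis .
qed

end




lemma lmap_id: "lmap (\<lambda>x. x)" by (simp add: lmap_def linear_on_def)

context hctx
begin

definition TK :: "'b \<Rightarrow> 'b \<Rightarrow> 'b \<Rightarrow> 'b \<Rightarrow> 'b \<Rightarrow> 'k" where
  "TK p r q s = mm (mm (mm (bas p) (bas r)) (SS (bas q))) (SS (bas s))"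

definition Phi :: "('b \<Rightarrow> 'k) \<Rightarrow> ('b \<Rightarrow> 'k) \<Rightarrow> 'b \<Rightarrow> 'k" where
  "Phi a b = lsum (DD a) (\<lambda>(i, j). lsum (DD b) (\<lambda>(k, l).
                    mm (mm (mm (bas i) (bas k)) (SS (bas j))) (SS (bas l))))"

lemma Phi_alt: "Phi x y = lsum (DD x) (\<lambda>w. lsum (DD y) (\<lambda>z. TK (fst w) (fst z) (snd w) (snd z)))"
  by (simp add: Phi_def TK_def split_def)

lemma TK_fs: "TK p r q s \<in> fsvec" by (simp add: TK_def m_fs S_fs bas_fs)

lemma lmap_Phi1: "y \<in> fsvec \<Longrightarrow> lmap (\<lambda>x. Phi x y)"
  unfolding Phi_alt
  by (rule lmap_comp[OF lin_D lmap_lsum]) (auto intro!: lsum_fs D_fs bas_fs TK_fs)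

lemma lmap_Phi2: "x \<in> fsvec \<Longrightarrow> lmap (\<lambda>y. Phi x y)"
  unfolding Phi_alt lsum_swap[of "DD x"]
  by (rule lmap_comp[OF lin_D lmap_lsum]) (auto intro!: lsum_fs D_fs bas_fs TK_fs)

lemma Phi_fs: "x \<in> fsvec \<Longrightarrow> y \<in> fsvec \<Longrightarrow> Phi x y \<in> fsvec"
  using lmap_fs[OF lmap_Phi1] by blast

lemma CA:
  assumes u: "u \<in> fsvec"
  shows "lsum (DD u) (\<lambda>z. lsum (DD (bas (fst z))) (\<lambda>z'. F (fst z') (snd z') (snd z)))
       = lsum (DD u) (\<lambda>z. lsum (DD (bas (snd z))) (\<lambda>z'. F (fst z) (fst z') (snd z')))"
proof -
  define W1 where "W1 = lsum (DD u) (\<lambda>(i, j). tensor (DD (bas i)) (bas j))"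
  define W2 where "W2 = lsum (DD u) (\<lambda>(i, j). tensor (bas i) (DD (bas j)))"
  define ra :: "('b \<times> 'b) \<times> 'b \<Rightarrow> 'b \<times> 'b \<times> 'b" where "ra = (\<lambda>((p, q), r). (p, (q, r)))"
  define la :: "'b \<times> 'b \<times> 'b \<Rightarrow> ('b \<times> 'b) \<times> 'b" where "la = (\<lambda>(p, (q, r)). ((p, q), r))"
  have W12: "W1 = (\<lambda>x. W2 (ra x))"
    unfolding W1_def W2_def ra_def using coassoc[OF u] by (simp add: split_def)
  have fs1: "\<forall>x. (case x of (i, j) \<Rightarrow> tensor (DD (bas i)) (bas j)) \<in> fsvec"
    by (auto intro!: tensor_fs D_fs bas_fs split: prod.split)
  have fs2: "\<forall>x. (case x of (i, j) \<Rightarrow> tensor (bas i) (DD (bas j))) \<in> fsvec"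
    by (auto intro!: tensor_fs D_fs bas_fs split: prod.split)
  have "lsum W1 (\<lambda>x. F (fst (fst x)) (snd (fst x)) (snd x))
     = lsum (DD u) (\<lambda>z. lsum (DD (bas (fst z))) (\<lambda>z'. F (fst z') (snd z') (snd z)))"
    unfolding W1_def lsum_lsum[OF D_fs[OF u] fs1] by (simp add: D_fs lsum_tensor bas_fs lsum_bas split_def)
  moreover have "lsum W2 (\<lambda>x. F (fst x) (fst (snd x)) (snd (snd x)))
     = lsum (DD u) (\<lambda>z. lsum (DD (bas (snd z))) (\<lambda>z'. F (fst z) (fst z') (snd z')))"
    unfolding W2_def lsum_lsum[OF D_fs[OF u] fs2] by (simp add: D_fs lsum_tensor bas_fs lsum_bas split_def)
  moreover have "lsum W1 (\<lambda>x. F (fst (fst x)) (snd (fst x)) (snd x))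
     = lsum W2 (\<lambda>x. F (fst x) (fst (snd x)) (snd (snd x)))"
  proof -
    have "lsum W1 (\<lambda>x. F (fst (fst x)) (snd (fst x)) (snd x))
       = lsum W2 (\<lambda>y. (\<lambda>x. F (fst (fst x)) (snd (fst x)) (snd x)) (la y))"
      unfolding W12 by (rule lsum_reindex) (auto simp: ra_def la_def split: prod.split)
    then show ?thesis by (simp add: la_def split_def)
  qed
  ultimately show ?thesis by simp
qed

lemma AD:
  assumes u: "u \<in> fsvec" and Z: "Z \<in> fsvec" and g: "lmap g"
  shows "lsum (DD u) (\<lambda>z. g (mm (mm Z (SS (bas (fst z)))) (bas (snd z)))) = smul (ep u) (g Z)"
proof -
  let ?f = "\<lambda>v. g (mm Z v)"
  have lf: "lmap ?f" by (rule lmap_comp[OF lin_m2[OF Z] g])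
  have "lsum (DD u) (\<lambda>z. g (mm (mm Z (SS (bas (fst z)))) (bas (snd z))))
      = lsum (DD u) (\<lambda>z. ?f (mm (SS (bas (fst z))) (bas (snd z))))"
    using Z by (simp add: m_assoc S_fs bas_fs)
  also have "\<dots> = ?f (lsum (DD u) (\<lambda>z. mm (SS (bas (fst z))) (bas (snd z))))"
    by (rule PL[OF lmap_lin[OF lf] D_fs[OF u], symmetric]) (auto intro: m_fs S_fs bas_fs)
  also have "lsum (DD u) (\<lambda>z. mm (SS (bas (fst z))) (bas (snd z))) = smul (ep u) ee"
    using anti1[OF u] by (simp add: split_def)
  also have "?f (smul (ep u) ee) = smul (ep u) (g Z)"
    using lf e_fs Z unfolding lmap_def linear_on_def by (simp add: m_e2)
  finally show ?thesis .
qed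

lemma CE2:
  assumes u: "u \<in> fsvec" and f: "lmap f"
  shows "lsum (DD u) (\<lambda>z. smul (ep (bas (snd z))) (f (bas (fst z)))) = f u"
proof -
  have "lsum (DD u) (\<lambda>z. smul (ep (bas (snd z))) (f (bas (fst z))))
      = lsum (DD u) (\<lambda>z. f (smul (ep (bas (snd z))) (bas (fst z))))"
  proof -
    have l: "\<And>c v. v \<in> fsvec \<Longrightarrow> f (smul c v) = smul c (f v)"
      using f unfolding lmap_def linear_on_def by blast
    show ?thesis by (simp add: l bas_fs)
  qed
  also have "\<dots> = f (lsum (DD u) (\<lambda>z. smul (ep (bas (snd z))) (bas (fst z))))"
    by (rule PL[OF lmap_lin[OF f] D_fs[OF u], symmetric]) (auto intro: smul_fs bas_fs)
  also have "lsum (DD u) (\<lambda>z. smul (ep (bas (snd z))) (bas (fst z))) = u"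
    using counit2[OF u] by (simp add: split_def)
  finally show ?thesis .
qed

lemma CE1:
  assumes u: "u \<in> fsvec" and f: "lmap f"
  shows "lsum (DD u) (\<lambda>z. smul (ep (bas (fst z))) (f (bas (snd z)))) = f u"
proof -
  have "lsum (DD u) (\<lambda>z. smul (ep (bas (fst z))) (f (bas (snd z))))
      = lsum (DD u) (\<lambda>z. f (smul (ep (bas (fst z))) (bas (snd z))))"
  proof -
    have l: "\<And>c v. v \<in> fsvec \<Longrightarrow> f (smul c v) = smul c (f v)"
      using f unfolding lmap_def linear_on_def by blast
    show ?thesis by (simp add: l bas_fs)
  qed
  also have "\<dots> = f (lsum (DD u) (\<lambda>z. smul (ep (bas (fst z))) (bas (snd z))))"
    by (rule PL[OF lmap_lin[OF f] D_fs[OF u], symmetric]) (auto intro: smul_fs bas_fs)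
  also have "lsum (DD u) (\<lambda>z. smul (ep (bas (fst z))) (bas (snd z))) = u"
    using counit1[OF u] by (simp add: split_def)
  finally show ?thesis .
qed


lemma lsum_cong': "(\<And>x. F x = G x) \<Longrightarrow> lsum u F = lsum u G"
  by (metis ext)

definition Psi :: "('b \<Rightarrow> 'k) \<Rightarrow> ('b \<Rightarrow> 'k) \<Rightarrow> 'b \<Rightarrow> 'k" where
  "Psi a b = lsum (DD a) (\<lambda>w. lsum (DD b) (\<lambda>z.
      mm (mm (Phi (bas (fst w)) (bas (fst z))) (bas (snd z))) (bas (snd w))))"

lemma stepA:
  "mm (mm (Phi (bas i) (bas k)) (bas l)) (bas j) = lsum (DD (bas i)) (\<lambda>w'. lsum (DD (bas k)) (\<lambda>z'.
      mm (mm (TK (fst w') (fst z') (snd w') (snd z')) (bas l)) (bas j)))"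
proof -
  let ?f = "\<lambda>v. mm (mm v (bas l)) (bas j)"
  have lf: "lmap ?f" by (rule lmap_comp[OF lin_m1 lin_m1]) (rule bas_fs)+
  have "?f (Phi (bas i) (bas k)) = lsum (DD (bas i)) (\<lambda>w'. ?f (lsum (DD (bas k)) (\<lambda>z'. TK (fst w') (fst z') (snd w') (snd z'))))"
    unfolding Phi_alt
    by (rule PL[OF lmap_lin[OF lf] D_fs[OF bas_fs]]) (auto intro!: lsum_fs D_fs bas_fs TK_fs)
  also have "\<dots> = lsum (DD (bas i)) (\<lambda>w'. lsum (DD (bas k)) (\<lambda>z'. ?f (TK (fst w') (fst z') (snd w') (snd z'))))"
    by (rule lsum_cong', rule PL[OF lmap_lin[OF lf] D_fs[OF bas_fs]]) (auto intro!: TK_fs)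
  finally show ?thesis .
qed

lemma Psi_2:
  assumes a: "a \<in> fsvec" and b: "b \<in> fsvec"
  shows "Psi a b = mm a b"
proof -
  have "Psi a b = lsum (DD a) (\<lambda>w. lsum (DD b) (\<lambda>z. lsum (DD (bas (fst w))) (\<lambda>w'. lsum (DD (bas (fst z))) (\<lambda>z'.
      mm (mm (TK (fst w') (fst z') (snd w') (snd z')) (bas (snd z))) (bas (snd w))))))"
    unfolding Psi_def stepA ..
  also have "\<dots> = lsum (DD a) (\<lambda>w. lsum (DD (bas (fst w))) (\<lambda>w'. lsum (DD b) (\<lambda>z. lsum (DD (bas (fst z))) (\<lambda>z'.
      mm (mm (TK (fst w') (fst z') (snd w') (snd z')) (bas (snd z))) (bas (snd w))))))"
    by (rule lsum_cong', rule lsum_swap)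
  also have "\<dots> = lsum (DD a) (\<lambda>w. lsum (DD (bas (fst w))) (\<lambda>w'. lsum (DD b) (\<lambda>z. lsum (DD (bas (snd z))) (\<lambda>z'.
      mm (mm (TK (fst w') (fst z) (snd w') (fst z')) (bas (snd z'))) (bas (snd w))))))"
    by (rule lsum_cong', rule lsum_cong', rule CA[OF b, where F = "\<lambda>r s l. mm (mm (TK _ r _ s) (bas l)) (bas _)"])
  also have "\<dots> = lsum (DD a) (\<lambda>w. lsum (DD (bas (fst w))) (\<lambda>w'. lsum (DD b) (\<lambda>z.
      smul (ep (bas (snd z))) (mm (mm (mm (bas (fst w')) (bas (fst z))) (SS (bas (snd w')))) (bas (snd w))))))"
  proof (rule lsum_cong', rule lsum_cong', rule lsum_cong')
    fix w w' z :: "'b \<times> 'b"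
    let ?Z = "mm (mm (bas (fst w')) (bas (fst z))) (SS (bas (snd w')))"
    have "lsum (DD (bas (snd z))) (\<lambda>z'. (\<lambda>v. mm v (bas (snd w))) (mm (mm ?Z (SS (bas (fst z')))) (bas (snd z'))))
        = smul (ep (bas (snd z))) ((\<lambda>v. mm v (bas (snd w))) ?Z)"
      by (rule AD) (auto intro!: bas_fs m_fs S_fs lin_m1)
    then show "lsum (DD (bas (snd z))) (\<lambda>z'. mm (mm (TK (fst w') (fst z) (snd w') (fst z')) (bas (snd z'))) (bas (snd w)))
       = smul (ep (bas (snd z))) (mm ?Z (bas (snd w)))"
      by (simp add: TK_def)
  qed
  also have "\<dots> = lsum (DD a) (\<lambda>w. lsum (DD (bas (fst w))) (\<lambda>w'.
      mm (mm (mm (bas (fst w')) b) (SS (bas (snd w')))) (bas (snd w))))"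
  proof (rule lsum_cong', rule lsum_cong')
    fix w w' :: "'b \<times> 'b"
    let ?f = "\<lambda>v. mm (mm (mm (bas (fst w')) v) (SS (bas (snd w')))) (bas (snd w))"
    have "lmap ?f"
      by (rule lmap_comp[OF lmap_comp[OF lin_m2 lin_m1] lin_m1]) (auto intro: bas_fs S_fs)
    from CE2[OF b this]
    show "lsum (DD b) (\<lambda>z. smul (ep (bas (snd z))) (mm (mm (mm (bas (fst w')) (bas (fst z))) (SS (bas (snd w')))) (bas (snd w))))
       = mm (mm (mm (bas (fst w')) b) (SS (bas (snd w')))) (bas (snd w))" .
  qed
  also have "\<dots> = lsum (DD a) (\<lambda>w. lsum (DD (bas (snd w))) (\<lambda>z'.
      mm (mm (mm (bas (fst w)) b) (SS (bas (fst z')))) (bas (snd z'))))"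
    by (rule CA[OF a, where F = "\<lambda>p q j. mm (mm (mm (bas p) b) (SS (bas q))) (bas j)"])
  also have "\<dots> = lsum (DD a) (\<lambda>w. smul (ep (bas (snd w))) (mm (bas (fst w)) b))"
  proof (rule lsum_cong')
    fix w :: "'b \<times> 'b"
    show "lsum (DD (bas (snd w))) (\<lambda>z'. mm (mm (mm (bas (fst w)) b) (SS (bas (fst z')))) (bas (snd z')))
       = smul (ep (bas (snd w))) (mm (bas (fst w)) b)"
      using AD[OF bas_fs _ lmap_id, of "mm (bas (fst w)) b" "snd w"] b by (simp add: m_fs bas_fs)
  qed
  also have "\<dots> = mm a b"
    using CE2[OF a lin_m1[OF b]] .
  finally show ?thesis .
qed


lemma E_bc:
  assumes "x \<in> fsvec" "x' \<in> fsvec" "y \<in> fsvec" "y' \<in> fsvec"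
  shows "lsum x (\<lambda>i. lsum x' (\<lambda>j. lsum y (\<lambda>k. lsum y' (\<lambda>l.
           mm (mm (mm (bas i) (bas k)) (SS (bas j))) (SS (bas l))))))
       = mm (mm (mm x y) (SS x')) (SS y')"
proof (rule ML4[where Q = "\<lambda>x x' y y'. mm (mm (mm x y) (SS x')) (SS y')", symmetric])
  fix b c d :: "'b \<Rightarrow> 'k" assume "b \<in> fsvec" "c \<in> fsvec" "d \<in> fsvec"
  then show "linear_on fsvec (\<lambda>x. mm (mm (mm x c) (SS b)) (SS d))"
    by (intro lmap_lin lmap_comp[OF lmap_comp[OF lin_m1 lin_m1] lin_m1] S_fs)
next
  fix a c d :: "'b \<Rightarrow> 'k" assume "a \<in> fsvec" "c \<in> fsvec" "d \<in> fsvec"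
  then show "linear_on fsvec (\<lambda>x. mm (mm (mm a c) (SS x)) (SS d))"
    by (intro lmap_lin lmap_comp[OF lmap_comp[OF lin_S lin_m2] lin_m1] S_fs m_fs)
next
  fix a b d :: "'b \<Rightarrow> 'k" assume "a \<in> fsvec" "b \<in> fsvec" "d \<in> fsvec"
  then show "linear_on fsvec (\<lambda>x. mm (mm (mm a x) (SS b)) (SS d))"
    by (intro lmap_lin lmap_comp[OF lmap_comp[OF lin_m2 lin_m1] lin_m1] S_fs m_fs)
next
  fix a b c :: "'b \<Rightarrow> 'k" assume "a \<in> fsvec" "b \<in> fsvec" "c \<in> fsvec"
  then show "linear_on fsvec (\<lambda>x. mm (mm (mm a c) (SS b)) (SS x))"
    by (intro lmap_lin lmap_comp[OF lin_S lin_m2] S_fs m_fs)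
qed (use assms in auto)

lemma E_cb:
  assumes "x \<in> fsvec" "x' \<in> fsvec" "y \<in> fsvec" "y' \<in> fsvec"
  shows "lsum x (\<lambda>i. lsum x' (\<lambda>j. lsum y (\<lambda>k. lsum y' (\<lambda>l.
           mm (mm (Phi (bas i) (bas k)) (bas l)) (bas j)))))
       = mm (mm (Phi x y) y') x'"
proof (rule ML4[where Q = "\<lambda>x x' y y'. mm (mm (Phi x y) y') x'", symmetric])
  fix b c d :: "'b \<Rightarrow> 'k" assume "b \<in> fsvec" "c \<in> fsvec" "d \<in> fsvec"
  then show "linear_on fsvec (\<lambda>x. mm (mm (Phi x c) d) b)"
    by (intro lmap_lin lmap_comp[OF lmap_comp[OF lmap_Phi1 lin_m1] lin_m1])
next
  fix a c d :: "'b \<Rightarrow> 'k" assume "a \<in> fsvec" "c \<in> fsvec" "d \<in> fsvec"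
  then show "linear_on fsvec (\<lambda>x. mm (mm (Phi a c) d) x)"
    by (intro lmap_lin lin_m2 m_fs Phi_fs)
next
  fix a b d :: "'b \<Rightarrow> 'k" assume "a \<in> fsvec" "b \<in> fsvec" "d \<in> fsvec"
  then show "linear_on fsvec (\<lambda>x. mm (mm (Phi a x) d) b)"
    by (intro lmap_lin lmap_comp[OF lmap_comp[OF lmap_Phi2 lin_m1] lin_m1])
next
  fix a b c :: "'b \<Rightarrow> 'k" assume "a \<in> fsvec" "b \<in> fsvec" "c \<in> fsvec"
  then show "linear_on fsvec (\<lambda>x. mm (mm (Phi a c) x) b)"
    by (intro lmap_lin lmap_comp[OF lin_m2 lin_m1] Phi_fs)
qed (use assms in auto)

lemma E_anti:
  assumes "x \<in> fsvec" "x' \<in> fsvec"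
  shows "lsum x (\<lambda>i. lsum x' (\<lambda>j. mm (bas i) (SS (bas j)))) = mm x (SS x')"
proof (rule ML2[where Q = "\<lambda>x x'. mm x (SS x')", symmetric])
  fix y :: "'b \<Rightarrow> 'k" assume "y \<in> fsvec"
  then show "linear_on fsvec (\<lambda>x. mm x (SS y))" by (intro lmap_lin lin_m1 S_fs)
next
  fix y :: "'b \<Rightarrow> 'k" assume "y \<in> fsvec"
  then show "linear_on fsvec (\<lambda>x. mm y (SS x))" by (intro lmap_lin lmap_comp[OF lin_S lin_m2])
qed (use assms in auto)

lemma E_counit:
  assumes "x \<in> fsvec" "x' \<in> fsvec"
  shows "lsum x (\<lambda>i. lsum x' (\<lambda>j. smul (ep (bas i)) (bas j))) = smul (ep x) x'"
  using assms by (simp add: lsum_bas_smul lsum_smul_const ep_exp[symmetric])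

lemma bridge4:
  fixes xs xs' ys ys' :: "nat \<Rightarrow> 'b \<Rightarrow> 'k"
  assumes "\<forall>n<N. xs n \<in> fsvec \<and> xs' n \<in> fsvec" "\<forall>k<K. ys k \<in> fsvec \<and> ys' k \<in> fsvec"
  shows "lsum (\<lambda>p. \<Sum>n<N. tensor (xs n) (xs' n) p) (\<lambda>w. lsum (\<lambda>p. \<Sum>k<K. tensor (ys k) (ys' k) p)
            (\<lambda>z. F (fst w) (snd w) (fst z) (snd z)))
       = (\<lambda>c. \<Sum>n<N. \<Sum>k<K. lsum (xs n) (\<lambda>i. lsum (xs' n) (\<lambda>j. lsum (ys k) (\<lambda>k'. lsum (ys' k) (\<lambda>l.
            F i j k' l)))) c)"
  using assms by (simp add: lsum_tspan lsum_vsum_right) (rule ext, rule sum.swap)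

end




context hctx
begin

lemma smul_smul: "smul (a::'k) (smul b (v::'b \<Rightarrow> 'k)) = smul (a * b) v"
  by (simp add: smul_def mult.assoc)


lemma smul_vsum: "smul (a::'k) (\<lambda>c::'b. \<Sum>k\<in>K. G k c) = (\<lambda>c. \<Sum>k\<in>K. smul a (G k) c)"
  by (simp add: smul_def sum_distrib_left)


lemma bc:
  assumes X: "X \<subseteq> fsvec" and Y: "Y \<subseteq> fsvec" and DX: "\<forall>u\<in>X. DD u \<in> tspan X X"
    and DY: "\<forall>u\<in>Y. DD u \<in> tspan Y Y" and comm: "\<forall>a\<in>X. \<forall>b\<in>Y. mm a b = mm b a"
    and a: "a \<in> X" and b: "b \<in> Y"
  shows "Phi a b = smul (ep a * ep b) ee"
proof -
  obtain N and xs xs' :: "nat \<Rightarrow> 'b \<Rightarrow> 'k" where r1: "\<forall>n<N. xs n \<in> X \<and> xs' n \<in> X"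
    and Da: "DD a = (\<lambda>p. \<Sum>n<N. tensor (xs n) (xs' n) p)" using DX a unfolding tspan_def by blast
  obtain K and ys ys' :: "nat \<Rightarrow> 'b \<Rightarrow> 'k" where r2: "\<forall>k<K. ys k \<in> Y \<and> ys' k \<in> Y"
    and Db: "DD b = (\<lambda>p. \<Sum>k<K. tensor (ys k) (ys' k) p)" using DY b unfolding tspan_def by blast
  have f1: "\<forall>n<N. xs n \<in> fsvec \<and> xs' n \<in> fsvec" using r1 X by blast
  have f2: "\<forall>k<K. ys k \<in> fsvec \<and> ys' k \<in> fsvec" using r2 Y by blast
  have af: "a \<in> fsvec" and bf: "b \<in> fsvec" using a b X Y by auto
  have "Phi a b = lsum (DD a) (\<lambda>w. lsum (DD b) (\<lambda>z. TK (fst w) (fst z) (snd w) (snd z)))"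
    by (rule Phi_alt)
  also have "\<dots> = (\<lambda>c. \<Sum>n<N. \<Sum>k<K. lsum (xs n) (\<lambda>i. lsum (xs' n) (\<lambda>j. lsum (ys k) (\<lambda>k'.
                    lsum (ys' k) (\<lambda>l. TK i k' j l)))) c)"
    unfolding Da Db by (rule bridge4[OF f1 f2, where F = "\<lambda>i j k l. TK i k j l"])
  also have "\<dots> = (\<lambda>c. \<Sum>n<N. \<Sum>k<K. mm (mm (mm (xs n) (ys k)) (SS (xs' n))) (SS (ys' k)) c)"
    using f1 f2 by (simp add: TK_def E_bc)
  also have "\<dots> = (\<lambda>c. \<Sum>n<N. \<Sum>k<K. mm (mm (ys k) (mm (xs n) (SS (xs' n)))) (SS (ys' k)) c)"
  proof (intro ext sum.cong refl)
    fix c n k assume "n \<in> {..<N}" "k \<in> {..<K}"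
    then have "xs n \<in> X" "ys k \<in> Y" "xs n \<in> fsvec" "ys k \<in> fsvec" "xs' n \<in> fsvec"
      using r1 r2 f1 f2 by auto
    then show "mm (mm (mm (xs n) (ys k)) (SS (xs' n))) (SS (ys' k)) c
             = mm (mm (ys k) (mm (xs n) (SS (xs' n)))) (SS (ys' k)) c"
    proof -
      have "mm (xs n) (ys k) = mm (ys k) (xs n)" using comm \<open>xs n \<in> X\<close> \<open>ys k \<in> Y\<close> by blast
      then show ?thesis using m_assoc[of "ys k" "xs n" "SS (xs' n)"] \<open>xs' n \<in> fsvec\<close> \<open>xs n \<in> fsvec\<close> \<open>ys k \<in> fsvec\<close>
        by (simp add: S_fs)
    qed
  qed
  also have "\<dots> = (\<lambda>c. \<Sum>k<K. \<Sum>n<N. mm (mm (ys k) (mm (xs n) (SS (xs' n)))) (SS (ys' k)) c)"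
    by (rule ext, rule sum.swap)
  also have "\<dots> = (\<lambda>c. \<Sum>k<K. mm (mm (ys k) (\<lambda>c'. \<Sum>n<N. mm (xs n) (SS (xs' n)) c')) (SS (ys' k)) c)"
  proof (intro ext sum.cong refl)
    fix c k assume "k \<in> {..<K}"
    then have yk: "ys k \<in> fsvec" "ys' k \<in> fsvec" using f2 by auto
    let ?f = "\<lambda>v. mm (mm (ys k) v) (SS (ys' k))"
    have lf: "lmap ?f" by (intro lmap_comp[OF lin_m2 lin_m1] yk S_fs)
    have "?f (\<lambda>c'. \<Sum>n<N. mm (xs n) (SS (xs' n)) c') = (\<lambda>c. \<Sum>n<N. ?f (mm (xs n) (SS (xs' n))) c)"
      by (rule linear_vsum[OF lmap_lin[OF lf]]) (use f1 in \<open>auto intro: m_fs S_fs\<close>)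
    then show "(\<Sum>n<N. mm (mm (ys k) (mm (xs n) (SS (xs' n)))) (SS (ys' k)) c)
       = mm (mm (ys k) (\<lambda>c'. \<Sum>n<N. mm (xs n) (SS (xs' n)) c')) (SS (ys' k)) c"
      by simp
  qed
  also have "(\<lambda>c'. \<Sum>n<N. mm (xs n) (SS (xs' n)) c') = smul (ep a) ee"
  proof -
    have "smul (ep a) ee = lsum (DD a) (\<lambda>(i, j). mm (bas i) (SS (bas j)))" by (rule anti2[OF af, symmetric])
    also have "\<dots> = (\<lambda>c. \<Sum>n<N. lsum (xs n) (\<lambda>i. lsum (xs' n) (\<lambda>j. mm (bas i) (SS (bas j)))) c)"
      unfolding Da using f1 by (simp add: lsum_tspan)
    also have "\<dots> = (\<lambda>c'. \<Sum>n<N. mm (xs n) (SS (xs' n)) c')"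
      using f1 by (simp add: E_anti)
    finally show ?thesis by simp
  qed
  also have "(\<lambda>c. \<Sum>k<K. mm (mm (ys k) (smul (ep a) ee)) (SS (ys' k)) c)
        = (\<lambda>c. \<Sum>k<K. smul (ep a) (mm (ys k) (SS (ys' k))) c)"
    using f2 by (intro ext sum.cong refl) (simp add: m_smul2 m_smul1 e_fs m_e2 m_fs S_fs)
  also have "\<dots> = smul (ep a) (\<lambda>c. \<Sum>k<K. mm (ys k) (SS (ys' k)) c)"
    by (simp add: smul_vsum)
  also have "(\<lambda>c. \<Sum>k<K. mm (ys k) (SS (ys' k)) c) = smul (ep b) ee"
  proof -
    have "smul (ep b) ee = lsum (DD b) (\<lambda>(i, j). mm (bas i) (SS (bas j)))" by (rule anti2[OF bf, symmetric])
    also have "\<dots> = (\<lambda>c. \<Sum>k<K. lsum (ys k) (\<lambda>i. lsum (ys' k) (\<lambda>j. mm (bas i) (SS (bas j)))) c)"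
      unfolding Db using f2 by (simp add: lsum_tspan)
    also have "\<dots> = (\<lambda>c'. \<Sum>k<K. mm (ys k) (SS (ys' k)) c')"
      using f2 by (simp add: E_anti)
    finally show ?thesis by simp
  qed
  finally show ?thesis by (simp add: smul_smul)
qed

lemma cb1:
  assumes X: "X \<subseteq> fsvec" and Y: "Y \<subseteq> fsvec" and DX: "\<forall>u\<in>X. DD u \<in> tspan X X"
    and DY: "\<forall>u\<in>Y. DD u \<in> tspan Y Y" and c: "\<forall>a\<in>X. \<forall>b\<in>Y. Phi a b = smul (ep a * ep b) ee"
    and a: "a \<in> X" and b: "b \<in> Y"
  shows "Psi a b = mm b a"
proof -
  obtain N and xs xs' :: "nat \<Rightarrow> 'b \<Rightarrow> 'k" where r1: "\<forall>n<N. xs n \<in> X \<and> xs' n \<in> X"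
    and Da: "DD a = (\<lambda>p. \<Sum>n<N. tensor (xs n) (xs' n) p)" using DX a unfolding tspan_def by blast
  obtain K and ys ys' :: "nat \<Rightarrow> 'b \<Rightarrow> 'k" where r2: "\<forall>k<K. ys k \<in> Y \<and> ys' k \<in> Y"
    and Db: "DD b = (\<lambda>p. \<Sum>k<K. tensor (ys k) (ys' k) p)" using DY b unfolding tspan_def by blast
  have f1: "\<forall>n<N. xs n \<in> fsvec \<and> xs' n \<in> fsvec" using r1 X by blast
  have f2: "\<forall>k<K. ys k \<in> fsvec \<and> ys' k \<in> fsvec" using r2 Y by blast
  have af: "a \<in> fsvec" and bf: "b \<in> fsvec" using a b X Y by auto
  have "Psi a b = (\<lambda>c. \<Sum>n<N. \<Sum>k<K. lsum (xs n) (\<lambda>i. lsum (xs' n) (\<lambda>j. lsum (ys k) (\<lambda>k'.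
                    lsum (ys' k) (\<lambda>l. mm (mm (Phi (bas i) (bas k')) (bas l)) (bas j))))) c)"
    unfolding Psi_def Da Db
    by (rule bridge4[OF f1 f2, where F = "\<lambda>i j k l. mm (mm (Phi (bas i) (bas k)) (bas l)) (bas j)"])
  also have "\<dots> = (\<lambda>c. \<Sum>n<N. \<Sum>k<K. mm (mm (Phi (xs n) (ys k)) (ys' k)) (xs' n) c)"
    using f1 f2 by (simp add: E_cb)
  also have "\<dots> = (\<lambda>c. \<Sum>n<N. \<Sum>k<K. smul (ep (ys k) * ep (xs n)) (mm (ys' k) (xs' n)) c)"
  proof (intro ext sum.cong refl)
    fix c n k assume "n \<in> {..<N}" "k \<in> {..<K}"
    then have "xs n \<in> X" "ys k \<in> Y" "xs' n \<in> fsvec" "ys' k \<in> fsvec"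
      using r1 r2 f1 f2 by auto
    then show "mm (mm (Phi (xs n) (ys k)) (ys' k)) (xs' n) c = smul (ep (ys k) * ep (xs n)) (mm (ys' k) (xs' n)) c"
      using c by (simp add: m_smul1 e_fs m_e1 m_fs mult.commute)
  qed
  also have "\<dots> = (\<lambda>c. \<Sum>k<K. \<Sum>n<N. mm (smul (ep (ys k)) (ys' k)) (smul (ep (xs n)) (xs' n)) c)"
    apply (rule ext, subst sum.swap, intro sum.cong refl)
    using f1 f2 by (simp add: m_smul1 m_smul2 smul_fs smul_smul mult.commute)
  also have "\<dots> = (\<lambda>c. \<Sum>k<K. mm (smul (ep (ys k)) (ys' k)) (\<lambda>c'. \<Sum>n<N. smul (ep (xs n)) (xs' n) c') c)"
    using f1 f2 by (simp add: m_vsum2 smul_fs)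
  also have "\<dots> = mm (\<lambda>c'. \<Sum>k<K. smul (ep (ys k)) (ys' k) c') (\<lambda>c'. \<Sum>n<N. smul (ep (xs n)) (xs' n) c')"
    using f1 f2 by (simp add: m_vsum1 smul_fs vsum_fs)
  also have "(\<lambda>c'. \<Sum>k<K. smul (ep (ys k)) (ys' k) c') = b"
  proof -
    have "b = lsum (DD b) (\<lambda>(i, j). smul (ep (bas i)) (bas j))" by (rule counit1[OF bf, symmetric])
    also have "\<dots> = (\<lambda>c. \<Sum>k<K. lsum (ys k) (\<lambda>i. lsum (ys' k) (\<lambda>j. smul (ep (bas i)) (bas j))) c)"
      unfolding Db using f2 by (simp add: lsum_tspan)
    also have "\<dots> = (\<lambda>c'. \<Sum>k<K. smul (ep (ys k)) (ys' k) c')"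
      using f2 by (simp add: E_counit)
    finally show ?thesis by simp
  qed
  also have "(\<lambda>c'. \<Sum>n<N. smul (ep (xs n)) (xs' n) c') = a"
  proof -
    have "a = lsum (DD a) (\<lambda>(i, j). smul (ep (bas i)) (bas j))" by (rule counit1[OF af, symmetric])
    also have "\<dots> = (\<lambda>c. \<Sum>n<N. lsum (xs n) (\<lambda>i. lsum (xs' n) (\<lambda>j. smul (ep (bas i)) (bas j))) c)"
      unfolding Da using f1 by (simp add: lsum_tspan)
    also have "\<dots> = (\<lambda>c'. \<Sum>n<N. smul (ep (xs n)) (xs' n) c')"
      using f1 by (simp add: E_counit)
    finally show ?thesis by simp
  qed
  finally show ?thesis .
qed

end


lemma (in hctx) norm_tensor:
  assumes X: "X \<subseteq> fsvec" and Y: "Y \<subseteq> fsvec" and eX: "ee \<in> X" and eY: "ee \<in> Y"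
    and p: "tensor_hopf_morphism H X Y p"
    and pa: "\<forall>a\<in>X. p (tensor a ee) = a" and pb: "\<forall>b\<in>Y. p (tensor ee b) = b"
    and a: "a \<in> X" and b: "b \<in> Y"
  shows "p (tensor a b) = mm a b \<and> p (tensor a b) = mm b a"
proof -
  have af: "a \<in> fsvec" and bf: "b \<in> fsvec" using a b X Y by auto
  have t1: "tensor a ee \<in> tspan X Y" unfolding tspan_def
    by (rule CollectI, rule exI[of _ "1::nat"], rule exI[of _ "\<lambda>_. a"], rule exI[of _ "\<lambda>_. ee"])
       (simp add: a eY)
  have t2: "tensor ee b \<in> tspan X Y" unfolding tspan_def
    by (rule CollectI, rule exI[of _ "1::nat"], rule exI[of _ "\<lambda>_. ee"], rule exI[of _ "\<lambda>_. b"])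
       (simp add: b eX)
  have pm: "\<forall>s\<in>tspan X Y. \<forall>t\<in>tspan X Y. p (tmult H s t) = mm (p s) (p t)"
    using p unfolding tensor_hopf_morphism_def by blast
  have "tmult H (tensor a ee) (tensor ee b) = tensor a b"
    using af bf by (simp add: tmult_tensor e_fs m_e1 m_e2)
  then have 1: "p (tensor a b) = mm a b" using pm t1 t2 pa pb a b by metis
  have "tmult H (tensor ee b) (tensor a ee) = tensor a b"
    using af bf by (simp add: tmult_tensor e_fs m_e1 m_e2)
  then have 2: "p (tensor a b) = mm b a" using pm t1 t2 pa pb a b by metis
  show ?thesis using 1 2 by simp
qed

lemma (in hctx) norm_all:
  assumes X: "X \<subseteq> fsvec" and Y: "Y \<subseteq> fsvec" and eX: "ee \<in> X" and eY: "ee \<in> Y"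
    and p: "tensor_hopf_morphism H X Y p"
    and pa: "\<forall>a\<in>X. p (tensor a ee) = a" and pb: "\<forall>b\<in>Y. p (tensor ee b) = b"
    and t: "t \<in> tspan X Y"
  shows "p t = PP t"
proof -
  obtain n and xs ys :: "nat \<Rightarrow> 'b \<Rightarrow> 'k" where r1: "\<forall>k<n. xs k \<in> X \<and> ys k \<in> Y"
    and t: "t = (\<lambda>p. \<Sum>k<n. tensor (xs k) (ys k) p)" using t unfolding tspan_def by blast
  have f1: "\<forall>k<n. xs k \<in> fsvec \<and> ys k \<in> fsvec" using r1 X Y by blast
  have lin: "linear_on fsvec p" using p unfolding tensor_hopf_morphism_def by blast
  have "p t = (\<lambda>c. \<Sum>k<n. p (tensor (xs k) (ys k)) c)"
    unfolding t by (rule linear_vsum[OF lin]) (use f1 in \<open>auto intro: tensor_fs\<close>)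
  also have "\<dots> = (\<lambda>c. \<Sum>k<n. mm (xs k) (ys k) c)"
    using norm_tensor[OF X Y eX eY p pa pb] r1 by simp
  also have "\<dots> = PP t" unfolding t using f1 by (simp add: P_sum)
  finally show ?thesis .
qed

theorem lemma4p1:
  fixes H :: "('b, 'k::field) hopf" and X Y :: "('b \<Rightarrow> 'k) set"
  assumes "hopf_algebra H" and "cocommutative H"
    and "hopf_subalgebra H X" and "hopf_subalgebra H Y"
  shows "((\<exists>p. tensor_hopf_morphism H X Y p \<and>
             (\<forall>a\<in>X. p (tensor a (hone H)) = a) \<and> (\<forall>b\<in>Y. p (tensor (hone H) b) = b))
          \<longleftrightarrow> (\<forall>a\<in>X. \<forall>b\<in>Y. hmult H a b = hmult H b a))
       \<and> ((\<forall>a\<in>X. \<forall>b\<in>Y. hmult H a b = hmult H b a)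
          \<longleftrightarrow> (\<forall>a\<in>X. \<forall>b\<in>Y.
                 lsum (hcomult H a) (\<lambda>(i, j). lsum (hcomult H b) (\<lambda>(k, l).
                    hmult H (hmult H (hmult H (bas i) (bas k)) (hantipode H (bas j)))
                            (hantipode H (bas l))))
                 = smul (hcounit H a * hcounit H b) (hone H)))
       \<and> (\<forall>p q. tensor_hopf_morphism H X Y p \<and>
                 (\<forall>a\<in>X. p (tensor a (hone H)) = a) \<and> (\<forall>b\<in>Y. p (tensor (hone H) b) = b) \<and>
                 tensor_hopf_morphism H X Y q \<and>
                 (\<forall>a\<in>X. q (tensor a (hone H)) = a) \<and> (\<forall>b\<in>Y. q (tensor (hone H) b) = b)
               \<longrightarrow> (\<forall>t\<in>tspan X Y. p t = q t))"
proof -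
  interpret hctx H by unfold_locales (rule assms(1))
  have X: "X \<subseteq> fsvec" and eX: "ee \<in> X" and DX: "\<forall>u\<in>X. DD u \<in> tspan X X"
    using assms(3) unfolding hopf_subalgebra_def by auto
  have Y: "Y \<subseteq> fsvec" and eY: "ee \<in> Y" and DY: "\<forall>u\<in>Y. DD u \<in> tspan Y Y"
    using assms(4) unfolding hopf_subalgebra_def by auto
  let ?A = "\<exists>p. tensor_hopf_morphism H X Y p \<and>
             (\<forall>a\<in>X. p (tensor a ee) = a) \<and> (\<forall>b\<in>Y. p (tensor ee b) = b)"
  let ?B = "\<forall>a\<in>X. \<forall>b\<in>Y. mm a b = mm b a"
  let ?C = "\<forall>a\<in>X. \<forall>b\<in>Y. Phi a b = smul (ep a * ep b) ee"
  have AB: "?A \<longleftrightarrow> ?B"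
  proof
    assume ?A
    then obtain p where "tensor_hopf_morphism H X Y p" "\<forall>a\<in>X. p (tensor a ee) = a"
      "\<forall>b\<in>Y. p (tensor ee b) = b" by blast
    from norm_tensor[OF X Y eX eY this] show ?B by metis
  next
    assume B: ?B
    have "tensor_hopf_morphism H X Y PP"
      unfolding tensor_hopf_morphism_def
    proof (intro conjI ballI)
      show "\<And>t. t \<in> fsvec \<Longrightarrow> PP t \<in> fsvec" using lmap_P by (simp add: lmap_def)
      show "linear_on fsvec PP" using lmap_P by (simp add: lmap_def)
      show "\<And>s t. s \<in> tspan X Y \<Longrightarrow> t \<in> tspan X Y \<Longrightarrow> PP (tmult H s t) = mm (PP s) (PP t)"
        by (rule P_mult[OF X Y B])
      show "PP (tone H) = ee" by (simp add: tone_def P_tensor e_fs m_e1)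
      show "\<And>t. t \<in> tspan X Y \<Longrightarrow> DD (PP t) = lsum (tcomult H t) (\<lambda>(x, y). tensor (PP (bas x)) (PP (bas y)))"
        by (rule P_comult[OF X Y])
      show "\<And>t. t \<in> tspan X Y \<Longrightarrow> ep (PP t) = tcounit H t"
        by (rule P_counit[OF X Y])
    qed
    moreover have "\<forall>a\<in>X. PP (tensor a ee) = a" using X by (auto simp: P_tensor e_fs m_e2)
    moreover have "\<forall>b\<in>Y. PP (tensor ee b) = b" using Y by (auto simp: P_tensor e_fs m_e1)
    ultimately show ?A by blast
  qed
  have BC: "?B \<longleftrightarrow> ?C"
  proof
    assume ?B
    then show ?C using bc[OF X Y DX DY] by blast
  next
    assume C: ?C
    show ?B
    proof (intro ballI)
      fix a b assume a: "a \<in> X" and b: "b \<in> Y"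
      have "mm a b = Psi a b" using a b X Y by (simp add: Psi_2 subsetD)
      also have "\<dots> = mm b a" by (rule cb1[OF X Y DX DY C a b])
      finally show "mm a b = mm b a" .
    qed
  qed
  have U: "\<forall>p q. tensor_hopf_morphism H X Y p \<and>
                 (\<forall>a\<in>X. p (tensor a ee) = a) \<and> (\<forall>b\<in>Y. p (tensor ee b) = b) \<and>
                 tensor_hopf_morphism H X Y q \<and>
                 (\<forall>a\<in>X. q (tensor a ee) = a) \<and> (\<forall>b\<in>Y. q (tensor ee b) = b)
               \<longrightarrow> (\<forall>t\<in>tspan X Y. p t = q t)"
    using norm_all[OF X Y eX eY] by metis
  show ?thesis using AB BC U unfolding Phi_def by blast
qed

end
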